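(* Let $n\ge 4$ and $F=\{5,6,\dots,n\}$. Denote the partial conjugations of $W_n$ by $x_{i,D}$ and those of $W_4$ by $y_{i,D}$. The assignment $\varphi_{5^+}:\mathrm{Out}^0(W_n)\to\mathrm{Out}^0(W_4)$ given on generators by $\varphi_{5^+}(x_{i,D})=\mathrm{id}$ if $i\ge 5$ or $D\subseteq F$ or $D^c\subseteq F$, and $\varphi_{5^+}(x_{i,D})=y_{i,D\setminus F}$ otherwise, defines a surjective homomorphism, and the assignment $\psi_{5^+}(y_{i,D})=x_{i,D}$ defines a homomorphism $\psi_{5^+}:\mathrm{Out}^0(W_4)\to\mathrm{Out}^0(W_n)$ with $\varphi_{5^+}\circ\psi_{5^+}=\mathrm{id}$. In particular $\mathrm{Out}^0(W_n)\cong\ker\varphi_{5^+}\rtimes\mathrm{Out}^0(W_4)$ and $\psi_{5^+}$ embeds $\mathrm{Out}^0(W_4)$ as a subgroup of $\mathrm{Out}^0(W_n)$.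
   Context: $W_n=\langle a_1,\dots,a_n\mid a_i^2=1\rangle$, $[n]=\{1,\dots,n\}$. For $i\in[n]$ and nonempty $D\subseteq[n]\setminus\{i\}$, the partial conjugation $x_{i,D}$ sends $a_j\mapsto a_ia_ja_i$ for $j\in D$ and fixes the other generators; $D^c=[n]\setminus(D\cup\{i\})$. $\mathrm{Out}^0(W_n)=\mathrm{Aut}^0(W_n)/\mathrm{Inn}(W_n)$ where $\mathrm{Aut}^0(W_n)$ consists of automorphisms sending each $a_j$ to a conjugate of itself; in it $x_{i,D}=x_{i,D^c}$. Generators are taken as the $x_{i,D}$ with $D$ nonempty and not containing the minimal element $m$ of $[n]\setminus\{i\}$ (i.e. $D\subseteq[n]\setminus\{i,m\}$). With $\widetilde D=D\cup\{i\}$, $\widetilde{D^c}=D^c\cup\{i\}$, a presentation (Mühlherr) of $\mathrm{Out}^0(W_n)$ on these generators has relations: (R1) $x_{i,D}^2=1$; (R2) $x_{i,D}x_{i,D'}=x_{i,(D\cup D')\setminus(D\cap D')}$; (R3) $[x_{i,D_i},x_{j,D_j}]=1$ whenever $\widetilde{D_i}\cap\widetilde{D_j}=\emptyset$, $\widetilde{D_i^c}\cap\widetilde{D_j}=\emptyset$, or $\widetilde{D_i}\cap\widetilde{D_j^c}=\emptyset$. *)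

theory Defs
  imports "HOL-Algebra.Algebra"
begin

text \<open>The right-angled Coxeter group W_n = < a_1,...,a_n | a_i^2 = 1 >, realised concretely
  by its normal forms: words over {1..n} with no two equal adjacent letters.
  The generator a_j is the one-letter word [j]; the product is concatenation followed
  by free cancellation of adjacent equal letters.\<close>

fun red_cons :: "nat \<Rightarrow> nat list \<Rightarrow> nat list" where
  "red_cons a [] = [a]"
| "red_cons a (b # w) = (if a = b then w else a # b # w)"

definition W :: "nat \<Rightarrow> nat list monoid" where
  "W n = \<lparr>carrier = {w. set w \<subseteq> {1..n} \<and> successively (\<noteq>) w},
          monoid.mult = (\<lambda>u v. foldr red_cons u v),
          one = []\<rparr>"

definition Aut0 :: "nat \<Rightarrow> (nat list \<Rightarrow> nat list) monoid" where
  "Aut0 n = (AutoGroup (W n))\<lparr>carrier :=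
     {f \<in> auto (W n). \<forall>j\<in>{1..n}. \<exists>g\<in>carrier (W n).
        f [j] = g \<otimes>\<^bsub>W n\<^esub> [j] \<otimes>\<^bsub>W n\<^esub> inv\<^bsub>W n\<^esub> g}\<rparr>"

definition conjW :: "nat \<Rightarrow> nat list \<Rightarrow> (nat list \<Rightarrow> nat list)" where
  "conjW n g = (\<lambda>x\<in>carrier (W n). g \<otimes>\<^bsub>W n\<^esub> x \<otimes>\<^bsub>W n\<^esub> inv\<^bsub>W n\<^esub> g)"

definition Inn :: "nat \<Rightarrow> (nat list \<Rightarrow> nat list) set" where
  "Inn n = conjW n ` carrier (W n)"

definition Out0 :: "nat \<Rightarrow> (nat list \<Rightarrow> nat list) set monoid" where
  "Out0 n = Aut0 n Mod Inn n"

definition extW :: "nat \<Rightarrow> (nat \<Rightarrow> nat list) \<Rightarrow> (nat list \<Rightarrow> nat list)" where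
  "extW n s = (\<lambda>w\<in>carrier (W n). foldr (\<lambda>j acc. s j \<otimes>\<^bsub>W n\<^esub> acc) w [])"

definition pconj :: "nat \<Rightarrow> nat \<Rightarrow> nat set \<Rightarrow> (nat list \<Rightarrow> nat list)" where
  "pconj n i D = extW n (\<lambda>j. if j \<in> D then [i] \<otimes>\<^bsub>W n\<^esub> [j] \<otimes>\<^bsub>W n\<^esub> [i] else [j])"

definition Xc :: "nat \<Rightarrow> nat \<Rightarrow> nat set \<Rightarrow> (nat list \<Rightarrow> nat list) set" where
  "Xc n i D = r_coset (Aut0 n) (Inn n) (pconj n i D)"

definition Dc :: "nat \<Rightarrow> nat \<Rightarrow> nat set \<Rightarrow> nat set" where
  "Dc n i D = {1..n} - (D \<union> {i})"

definition gens :: "nat \<Rightarrow> (nat \<times> nat set) set" where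
  "gens n = {(i, D). i \<in> {1..n} \<and> D \<noteq> {} \<and> D \<subseteq> {1..n} - {i, Min ({1..n} - {i})}}"

end

theory Submission
  imports Defs
begin



abbreviation act :: "nat list \<Rightarrow> nat list \<Rightarrow> nat list" where
  "act u v \<equiv> foldr red_cons u v"

abbreviation rd :: "nat list \<Rightarrow> bool" where "rd w \<equiv> successively (\<noteq>) w"

lemma red_cons_rd: "rd w \<Longrightarrow> rd (red_cons a w)"
  by (cases w) (auto simp: successively_Cons)

lemma red_cons_set: "set (red_cons a w) \<subseteq> insert a (set w)"
  by (cases w) auto

lemma act_rd: "rd v \<Longrightarrow> rd (act u v)"
  by (induction u) (auto intro: red_cons_rd)

lemma act_set: "set (act u v) \<subseteq> set u \<union> set v"
  apply (induction u) apply simp using red_cons_set by fastforce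

lemma red_cons_invol: "rd w \<Longrightarrow> red_cons a (red_cons a w) = w"
  apply (cases w) apply simp
  subgoal for b w' by (cases w') (auto simp: successively_Cons)
  done

lemma act_self: "rd v \<Longrightarrow> act v [] = v"
  apply (induction v rule: induct_list012) apply simp apply simp
  by (auto simp: successively_Cons)

lemma red_cons_act: "rd r \<Longrightarrow> rd w \<Longrightarrow> red_cons a (act r w) = act (red_cons a r) w"
  apply (cases r)
   apply simp
  subgoal for b r'
    by (auto simp: successively_Cons red_cons_invol act_rd)
  done

lemma act_red: "rd w \<Longrightarrow> act (act u []) w = act u w"
proof (induction u)
  case Nil then show ?case by simp
next
  case (Cons a u)
  have "act (act (a#u) []) w = act (red_cons a (act u [])) w" by simp
  also have "\<dots> = red_cons a (act (act u []) w)"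
    by (rule red_cons_act[symmetric]) (auto intro: act_rd Cons.prems)
  also have "\<dots> = act (a#u) w" using Cons by simp
  finally show ?case .
qed

lemma act_assoc: "rd v \<Longrightarrow> rd w \<Longrightarrow> act (act u v) w = act u (act v w)"
proof -
  assume v: "rd v" and w: "rd w"
  have "act (u @ v) [] = act u v" using act_self[OF v] by (simp add: foldr_append)
  then have "act u v = act (u @ v) []" by simp
  moreover have "act (act (u@v) []) w = act (u@v) w" by (rule act_red[OF w])
  ultimately show ?thesis by (simp only: foldr_append o_apply)
qed

lemma act_rev: "act (rev u) (act u []) = []"
proof (induction u)
  case Nil then show ?case by simp
next
  case (Cons a u)
  have "act (rev (a#u)) (act (a#u) []) = act (rev u) (red_cons a (red_cons a (act u [])))"
    by (simp add: foldr_append)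
  also have "\<dots> = act (rev u) (act u [])" by (simp add: red_cons_invol act_rd)
  finally show ?case using Cons by simp
qed

lemma rd_sym: "rd x \<Longrightarrow> successively (\<lambda>a b. b \<noteq> a) x"
  by (induction x rule: induct_list012) auto

lemma W_carrier: "carrier (W n) = {w. set w \<subseteq> {1..n} \<and> rd w}" by (simp add: W_def)
lemma W_mult: "x \<otimes>\<^bsub>W n\<^esub> y = act x y" by (simp add: W_def)
lemma W_one: "\<one>\<^bsub>W n\<^esub> = []" by (simp add: W_def)

lemma group_W: "group (W n)"
proof (rule groupI)
  fix x y assume "x \<in> carrier (W n)" "y \<in> carrier (W n)"
  then show "x \<otimes>\<^bsub>W n\<^esub> y \<in> carrier (W n)"
    using act_set[of x y] by (auto simp: W_carrier W_mult intro: act_rd)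
next
  show "\<one>\<^bsub>W n\<^esub> \<in> carrier (W n)" by (simp add: W_carrier W_one)
next
  fix x y z assume "x \<in> carrier (W n)" "y \<in> carrier (W n)" "z \<in> carrier (W n)"
  then show "x \<otimes>\<^bsub>W n\<^esub> y \<otimes>\<^bsub>W n\<^esub> z = x \<otimes>\<^bsub>W n\<^esub> (y \<otimes>\<^bsub>W n\<^esub> z)"
    by (simp add: W_carrier W_mult act_assoc)
next
  fix x assume "x \<in> carrier (W n)" then show "\<one>\<^bsub>W n\<^esub> \<otimes>\<^bsub>W n\<^esub> x = x"
    by (simp add: W_one W_mult)
next
  fix x assume x: "x \<in> carrier (W n)"
  then show "\<exists>y\<in>carrier (W n). y \<otimes>\<^bsub>W n\<^esub> x = \<one>\<^bsub>W n\<^esub>"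
    using act_rev[of x] act_self[of x]
    by (intro bexI[of _ "rev x"]) (auto simp: W_carrier W_mult W_one successively_rev rd_sym)
qed

lemma W_inv: "x \<in> carrier (W n) \<Longrightarrow> inv\<^bsub>W n\<^esub> x = rev x"
  apply (rule group.inv_equality[OF group_W])
  using act_rev[of x] act_self[of x] by (auto simp: W_carrier W_mult W_one successively_rev rd_sym)




definition prodG :: "('b, 'c) monoid_scheme \<Rightarrow> (nat \<Rightarrow> 'b) \<Rightarrow> nat list \<Rightarrow> 'b" where
  "prodG G s w = foldr (\<lambda>j acc. s j \<otimes>\<^bsub>G\<^esub> acc) w \<one>\<^bsub>G\<^esub>"

lemma prodG_Nil[simp]: "prodG G s [] = \<one>\<^bsub>G\<^esub>" by (simp add: prodG_def)
lemma prodG_Cons[simp]: "prodG G s (a # w) = s a \<otimes>\<^bsub>G\<^esub> prodG G s w" by (simp add: prodG_def)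

lemma extW_eq: "extW n s = (\<lambda>w\<in>carrier (W n). prodG (W n) s w)"
  by (simp add: extW_def prodG_def W_one)

context group begin

lemma prodG_closed: "(\<And>j. j \<in> set w \<Longrightarrow> s j \<in> carrier G) \<Longrightarrow> prodG G s w \<in> carrier G"
  by (induction w) auto

lemma prodG_red_cons:
  assumes "\<And>j. j \<in> insert a (set w) \<Longrightarrow> s j \<in> carrier G" "s a \<otimes> s a = \<one>"
  shows "prodG G s (red_cons a w) = s a \<otimes> prodG G s w"
proof (cases w)
  case Nil then show ?thesis using assms by simp
next
  case (Cons b w')
  show ?thesis
  proof (cases "a = b")
    case True
    have "s a \<otimes> prodG G s w = (s a \<otimes> s a) \<otimes> prodG G s w'"
      using assms Cons True by (simp add: m_assoc[symmetric] prodG_closed del: \<open>s a \<otimes> s a = \<one>\<close>)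
    also have "\<dots> = prodG G s w'" using assms Cons True by (simp add: prodG_closed)
    finally show ?thesis using Cons True by simp
  qed (use Cons in simp)
qed

lemma prodG_act:
  assumes "\<And>j. j \<in> set u \<union> set v \<Longrightarrow> s j \<in> carrier G \<and> s j \<otimes> s j = \<one>"
  shows "prodG G s (act u v) = prodG G s u \<otimes> prodG G s v"
  using assms
proof (induction u)
  case Nil then show ?case by (simp add: prodG_closed)
next
  case (Cons a u)
  have "prodG G s (act (a#u) v) = prodG G s (red_cons a (act u v))" by simp
  also have "\<dots> = s a \<otimes> prodG G s (act u v)"
    apply (rule prodG_red_cons) using Cons.prems act_set[of u v] by auto
  also have "\<dots> = s a \<otimes> (prodG G s u \<otimes> prodG G s v)" using Cons by simp
  also have "\<dots> = prodG G s (a#u) \<otimes> prodG G s v"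
    using Cons.prems by (simp add: m_assoc prodG_closed)
  finally show ?case .
qed

lemma ext_hom:
  assumes "\<And>j. j \<in> {1..n} \<Longrightarrow> s j \<in> carrier G \<and> s j \<otimes> s j = \<one>"
  shows "(\<lambda>w\<in>carrier (W n). prodG G s w) \<in> hom (W n) G"
proof (rule homI)
  fix x assume "x \<in> carrier (W n)"
  then show "(\<lambda>w\<in>carrier (W n). prodG G s w) x \<in> carrier G"
    using assms by (auto simp: W_carrier intro!: prodG_closed)
next
  fix x y assume xy: "x \<in> carrier (W n)" "y \<in> carrier (W n)"
  then have "x \<otimes>\<^bsub>W n\<^esub> y \<in> carrier (W n)" by (simp add: group.subgroup_self group_W subgroup.m_closed)
  then show "(\<lambda>w\<in>carrier (W n). prodG G s w) (x \<otimes>\<^bsub>W n\<^esub> y) =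
       (\<lambda>w\<in>carrier (W n). prodG G s w) x \<otimes> (\<lambda>w\<in>carrier (W n). prodG G s w) y"
    using xy assms by (auto simp: W_mult W_carrier intro!: prodG_act)
qed

end

lemma gen_carrier: "j \<in> {1..n} \<Longrightarrow> [j] \<in> carrier (W n)"
  by (simp add: W_carrier)

lemma W_Cons: "j # w \<in> carrier (W n) \<Longrightarrow> j # w = [j] \<otimes>\<^bsub>W n\<^esub> w \<and> w \<in> carrier (W n) \<and> j \<in> {1..n}"
  by (cases w) (auto simp: W_carrier W_mult successively_Cons)

lemma hom_prodG:
  assumes "group G" "h \<in> hom (W n) G" "w \<in> carrier (W n)"
  shows "h w = prodG G (\<lambda>j. h [j]) w"
  using assms(3)
proof (induction w)
  case Nil then show ?case
    using assms group.subgroup_self group_W hom_one by (fastforce simp: W_one)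
next
  case (Cons a w)
  from W_Cons[OF Cons.prems] have "a # w = [a] \<otimes>\<^bsub>W n\<^esub> w" "w \<in> carrier (W n)" "a \<in> {1..n}" by auto
  then have "h (a # w) = h [a] \<otimes>\<^bsub>G\<^esub> h w" using assms(2) gen_carrier by (metis hom_mult)
  then show ?case using Cons \<open>w \<in> carrier (W n)\<close> by simp
qed

lemma hom_unique:
  assumes "group G" "h \<in> hom (W n) G" "h' \<in> hom (W n) G"
    "\<And>j. j \<in> {1..n} \<Longrightarrow> h [j] = h' [j]" "w \<in> carrier (W n)"
  shows "h w = h' w"
proof -
  have "prodG G (\<lambda>j. h [j]) w = prodG G (\<lambda>j. h' [j]) w"
    using assms(4,5) unfolding prodG_def by (induction w) (auto simp: W_carrier successively_Cons)
  then show ?thesis using hom_prodG assms by metis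
qed

lemma prodG_cong: "(\<And>j. j \<in> set w \<Longrightarrow> s j = s' j) \<Longrightarrow> prodG G s w = prodG G s' w"
  by (induction w) auto

lemma extW_cong: "(\<And>j. j \<in> {1..n} \<Longrightarrow> s j = s' j) \<Longrightarrow> extW n s = extW n s'"
  unfolding extW_eq by (intro restrict_ext prodG_cong) (auto simp: W_carrier)

lemma ext_gen: "j \<in> {1..n} \<Longrightarrow> (\<lambda>w\<in>carrier (W n). prodG G s w) [j] = s j \<otimes>\<^bsub>G\<^esub> \<one>\<^bsub>G\<^esub>"
  by (simp add: gen_carrier)

lemma W4_sub: "n \<ge> 4 \<Longrightarrow> carrier (W 4) \<subseteq> carrier (W n)"
  by (auto simp: W_carrier)

lemma gen_sq: "[j] \<otimes>\<^bsub>W n\<^esub> [j] = \<one>\<^bsub>W n\<^esub>" by (simp add: W_mult W_one)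




definition A0 :: "nat \<Rightarrow> (nat list \<Rightarrow> nat list) set" where
  "A0 n = {f \<in> auto (W n). \<forall>j\<in>{1..n}. \<exists>g\<in>carrier (W n).
        f [j] = g \<otimes>\<^bsub>W n\<^esub> [j] \<otimes>\<^bsub>W n\<^esub> inv\<^bsub>W n\<^esub> g}"

lemma Aut0_carrier: "carrier (Aut0 n) = A0 n" by (simp add: Aut0_def A0_def)

lemma auto_Bij: "f \<in> auto G \<Longrightarrow> f \<in> Bij (carrier G)" by (simp add: auto_def)
lemma auto_hom: "f \<in> auto G \<Longrightarrow> f \<in> hom G G" by (simp add: auto_def)

lemma AutoG_mult: "f \<in> auto G \<Longrightarrow> h \<in> auto G \<Longrightarrow> f \<otimes>\<^bsub>AutoGroup G\<^esub> h = compose (carrier G) f h"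
  by (simp add: AutoGroup_def BijGroup_def auto_Bij)
lemma AutoG_one: "\<one>\<^bsub>AutoGroup G\<^esub> = (\<lambda>x\<in>carrier G. x)"
  by (simp add: AutoGroup_def BijGroup_def)

lemma Aut0_mult: "f \<in> A0 n \<Longrightarrow> h \<in> A0 n \<Longrightarrow> f \<otimes>\<^bsub>Aut0 n\<^esub> h = compose (carrier (W n)) f h"
  by (simp add: Aut0_def AutoG_mult A0_def)
lemma Aut0_one: "\<one>\<^bsub>Aut0 n\<^esub> = (\<lambda>x\<in>carrier (W n). x)"
  by (simp add: Aut0_def AutoG_one)

lemma hom_W_closed: "f \<in> hom (W n) (W n) \<Longrightarrow> x \<in> carrier (W n) \<Longrightarrow> f x \<in> carrier (W n)"
  by (simp add: hom_def Pi_iff)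

lemma hom_W_inv: "f \<in> hom (W n) (W n) \<Longrightarrow> x \<in> carrier (W n) \<Longrightarrow> f (inv\<^bsub>W n\<^esub> x) = inv\<^bsub>W n\<^esub> (f x)"
  by (meson group_W group_hom.hom_inv group_hom.intro group_hom_axioms.intro)

lemma (in group) conj_solve:
  assumes "a \<in> carrier G" "y \<in> carrier G" "x = a \<otimes> y \<otimes> inv a"
  shows "y = inv a \<otimes> x \<otimes> a"
  using assms by (simp add: m_assoc[symmetric]) (simp add: m_assoc)
lemma (in group) conj_comp:
  assumes "g \<in> carrier G" "g' \<in> carrier G" "j \<in> carrier G"
  shows "g \<otimes> (g' \<otimes> j \<otimes> inv g') \<otimes> inv g = (g \<otimes> g') \<otimes> j \<otimes> inv (g \<otimes> g')"
  using assms by (simp add: m_assoc inv_mult_group)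

lemma (in group) inv_cancel_left1[simp]:
  "x \<in> carrier G \<Longrightarrow> y \<in> carrier G \<Longrightarrow> inv x \<otimes> (x \<otimes> y) = y"
  by (simp add: m_assoc[symmetric])
lemma (in group) inv_cancel_left2[simp]:
  "x \<in> carrier G \<Longrightarrow> y \<in> carrier G \<Longrightarrow> x \<otimes> (inv x \<otimes> y) = y"
  by (simp add: m_assoc[symmetric])

lemma subgroup_A0: "subgroup (A0 n) (AutoGroup (W n))"
proof -
  interpret Wn: group "W n" by (rule group_W)
  interpret AG: group "AutoGroup (W n)" by (rule Wn.AutoGroup)
  interpret SA: subgroup "auto (W n)" "BijGroup (carrier (W n))" by (rule Wn.subgroup_auto)
  have AGc: "carrier (AutoGroup (W n)) = auto (W n)" by (simp add: AutoGroup_def)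
  show ?thesis
  proof (rule AG.subgroupI)
    show "A0 n \<subseteq> carrier (AutoGroup (W n))" by (auto simp: A0_def AGc)
    show "A0 n \<noteq> {}"
    proof -
      have "(\<lambda>x\<in>carrier (W n). x) \<in> A0 n"
      proof -
        have "\<forall>j\<in>{1..n}. \<exists>g\<in>carrier (W n). (\<lambda>x\<in>carrier (W n). x) [j] = g \<otimes>\<^bsub>W n\<^esub> [j] \<otimes>\<^bsub>W n\<^esub> inv\<^bsub>W n\<^esub> g"
          by (auto intro!: bexI[of _ "\<one>\<^bsub>W n\<^esub>"] simp: gen_carrier)
        then show ?thesis unfolding A0_def using Wn.id_in_auto by simp
      qed
      then show ?thesis by blast
    qed
  next
    fix f assume f: "f \<in> A0 n"
    define h where "h = inv\<^bsub>AutoGroup (W n)\<^esub> f"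
    have fa: "f \<in> auto (W n)" using f by (simp add: A0_def)
    then have ha: "h \<in> auto (W n)" unfolding h_def using AG.inv_closed AGc by auto
    have "h \<otimes>\<^bsub>AutoGroup (W n)\<^esub> f = \<one>\<^bsub>AutoGroup (W n)\<^esub>" unfolding h_def using fa AGc by simp
    then have "compose (carrier (W n)) h f = (\<lambda>x\<in>carrier (W n). x)"
      using fa ha by (simp add: AutoG_mult AutoG_one)
    then have hf: "\<And>x. x \<in> carrier (W n) \<Longrightarrow> h (f x) = x"
      by (metis compose_eq restrict_apply')
    have hh: "h \<in> hom (W n) (W n)" and fh: "f \<in> hom (W n) (W n)" using ha fa by (auto simp: auto_hom)
    have "\<forall>j\<in>{1..n}. \<exists>g\<in>carrier (W n). h [j] = g \<otimes>\<^bsub>W n\<^esub> [j] \<otimes>\<^bsub>W n\<^esub> inv\<^bsub>W n\<^esub> g"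
    proof
      fix j assume j: "j \<in> {1..n}"
      obtain g where g: "g \<in> carrier (W n)" "f [j] = g \<otimes>\<^bsub>W n\<^esub> [j] \<otimes>\<^bsub>W n\<^esub> inv\<^bsub>W n\<^esub> g"
        using f j unfolding A0_def by blast
      have hg: "h g \<in> carrier (W n)" "h [j] \<in> carrier (W n)" using hh g j gen_carrier hom_W_closed by auto
      have "[j] = h (f [j])" using hf j gen_carrier by metis
      also have "\<dots> = h g \<otimes>\<^bsub>W n\<^esub> h [j] \<otimes>\<^bsub>W n\<^esub> inv\<^bsub>W n\<^esub> (h g)"
        using g j hh by (simp add: gen_carrier hom_mult hom_W_inv)
      finally have "h [j] = inv\<^bsub>W n\<^esub> (h g) \<otimes>\<^bsub>W n\<^esub> [j] \<otimes>\<^bsub>W n\<^esub> (h g)"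
        by (rule Wn.conj_solve[OF hg(1) hg(2)])
      then have "inv\<^bsub>W n\<^esub> (h g) \<otimes>\<^bsub>W n\<^esub> [j] \<otimes>\<^bsub>W n\<^esub> inv\<^bsub>W n\<^esub> (inv\<^bsub>W n\<^esub> (h g)) = h [j]"
        using hg by simp
      then show "\<exists>g\<in>carrier (W n). h [j] = g \<otimes>\<^bsub>W n\<^esub> [j] \<otimes>\<^bsub>W n\<^esub> inv\<^bsub>W n\<^esub> g"
        using hg by (metis Wn.inv_closed)
    qed
    then show "inv\<^bsub>AutoGroup (W n)\<^esub> f \<in> A0 n" using ha unfolding h_def A0_def by simp
  next
    fix f h assume f: "f \<in> A0 n" and h: "h \<in> A0 n"
    have fa: "f \<in> auto (W n)" and ha: "h \<in> auto (W n)" using f h by (auto simp: A0_def)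
    have fh: "f \<in> hom (W n) (W n)" using fa by (simp add: auto_hom)
    have ca: "compose (carrier (W n)) f h \<in> auto (W n)"
      using AG.m_closed[of f h] fa ha AGc by (simp add: AutoG_mult)
    have "\<forall>j\<in>{1..n}. \<exists>g\<in>carrier (W n). compose (carrier (W n)) f h [j] = g \<otimes>\<^bsub>W n\<^esub> [j] \<otimes>\<^bsub>W n\<^esub> inv\<^bsub>W n\<^esub> g"
    proof
      fix j assume j: "j \<in> {1..n}"
      obtain g where g: "g \<in> carrier (W n)" "h [j] = g \<otimes>\<^bsub>W n\<^esub> [j] \<otimes>\<^bsub>W n\<^esub> inv\<^bsub>W n\<^esub> g"
        using h j unfolding A0_def by blast
      obtain g' where g': "g' \<in> carrier (W n)" "f [j] = g' \<otimes>\<^bsub>W n\<^esub> [j] \<otimes>\<^bsub>W n\<^esub> inv\<^bsub>W n\<^esub> g'"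
        using f j unfolding A0_def by blast
      have fg: "f g \<in> carrier (W n)" using fh g hom_W_closed by auto
      have "compose (carrier (W n)) f h [j] = f g \<otimes>\<^bsub>W n\<^esub> f [j] \<otimes>\<^bsub>W n\<^esub> inv\<^bsub>W n\<^esub> (f g)"
        using g j fh by (simp add: compose_def gen_carrier hom_mult hom_W_inv)
      also have "\<dots> = (f g \<otimes>\<^bsub>W n\<^esub> g') \<otimes>\<^bsub>W n\<^esub> [j] \<otimes>\<^bsub>W n\<^esub> inv\<^bsub>W n\<^esub> (f g \<otimes>\<^bsub>W n\<^esub> g')"
        using g' fg j gen_carrier by (simp add: Wn.conj_comp)
      finally show "\<exists>g\<in>carrier (W n). compose (carrier (W n)) f h [j] = g \<otimes>\<^bsub>W n\<^esub> [j] \<otimes>\<^bsub>W n\<^esub> inv\<^bsub>W n\<^esub> g"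
        using fg g' by blast
    qed
    then show "f \<otimes>\<^bsub>AutoGroup (W n)\<^esub> h \<in> A0 n" using ca fa ha by (simp add: A0_def AutoG_mult)
  qed
qed

lemma group_Aut0: "group (Aut0 n)"
proof -
  have "group ((AutoGroup (W n))\<lparr>carrier := A0 n\<rparr>)"
    by (rule subgroup.subgroup_is_group[OF subgroup_A0 group.AutoGroup[OF group_W]])
  then show ?thesis by (simp add: Aut0_def A0_def)
qed




lemma conjW_app: "x \<in> carrier (W n) \<Longrightarrow> conjW n g x = g \<otimes>\<^bsub>W n\<^esub> x \<otimes>\<^bsub>W n\<^esub> inv\<^bsub>W n\<^esub> g"
  by (simp add: conjW_def)

lemma conjW_hom: "g \<in> carrier (W n) \<Longrightarrow> conjW n g \<in> hom (W n) (W n)"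
proof -
  interpret Wn: group "W n" by (rule group_W)
  assume g: "g \<in> carrier (W n)"
  show ?thesis
    by (rule homI) (use g in \<open>auto simp: conjW_app Wn.m_assoc\<close>)
qed

lemma auto_intro:
  assumes "f \<in> hom (W n) (W n)" "f \<in> extensional (carrier (W n))"
    "h \<in> carrier (W n) \<rightarrow> carrier (W n)"
    "\<And>x. x \<in> carrier (W n) \<Longrightarrow> h (f x) = x" "\<And>x. x \<in> carrier (W n) \<Longrightarrow> f (h x) = x"
  shows "f \<in> auto (W n)"
proof -
  have "bij_betw f (carrier (W n)) (carrier (W n))"
    apply (rule bij_betw_byWitness[of _ h])
    using assms hom_W_closed by auto
  then show ?thesis using assms by (simp add: auto_def Bij_def)
qed

lemma conjW_auto: "g \<in> carrier (W n) \<Longrightarrow> conjW n g \<in> auto (W n)"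
proof -
  interpret Wn: group "W n" by (rule group_W)
  assume g: "g \<in> carrier (W n)"
  show ?thesis
  proof (rule auto_intro[OF conjW_hom[OF g], of "conjW n (inv\<^bsub>W n\<^esub> g)"])
    show "conjW n g \<in> extensional (carrier (W n))" by (simp add: conjW_def)
    show "conjW n (inv\<^bsub>W n\<^esub> g) \<in> carrier (W n) \<rightarrow> carrier (W n)" using g by (auto simp: conjW_app)
  qed (use g in \<open>auto simp: conjW_app Wn.m_assoc\<close>)
qed

lemma conjW_A0: "g \<in> carrier (W n) \<Longrightarrow> conjW n g \<in> A0 n"
  unfolding A0_def using conjW_auto by (auto simp: conjW_app gen_carrier)

lemma Inn_sub: "Inn n \<subseteq> A0 n" unfolding Inn_def using conjW_A0 by auto

lemma conjW_mult: "g \<in> carrier (W n) \<Longrightarrow> h \<in> carrier (W n) \<Longrightarrow>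
   conjW n g \<otimes>\<^bsub>Aut0 n\<^esub> conjW n h = conjW n (g \<otimes>\<^bsub>W n\<^esub> h)"
proof -
  interpret Wn: group "W n" by (rule group_W)
  assume g: "g \<in> carrier (W n)" and h: "h \<in> carrier (W n)"
  have "conjW n g \<otimes>\<^bsub>Aut0 n\<^esub> conjW n h = compose (carrier (W n)) (conjW n g) (conjW n h)"
    using g h by (simp add: Aut0_mult conjW_A0)
  also have "\<dots> = conjW n (g \<otimes>\<^bsub>W n\<^esub> h)"
    unfolding compose_def conjW_def[of n "g \<otimes>\<^bsub>W n\<^esub> h"]
    by (rule restrict_ext) (use g h in \<open>simp add: conjW_app Wn.conj_comp\<close>)
  finally show ?thesis .
qed

lemma conjW_one: "conjW n \<one>\<^bsub>W n\<^esub> = \<one>\<^bsub>Aut0 n\<^esub>"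
proof -
  interpret Wn: group "W n" by (rule group_W)
  show ?thesis by (auto simp: Aut0_one conjW_def intro!: restrict_ext)
qed

lemma conjW_inv: "g \<in> carrier (W n) \<Longrightarrow> inv\<^bsub>Aut0 n\<^esub> (conjW n g) = conjW n (inv\<^bsub>W n\<^esub> g)"
proof -
  interpret Wn: group "W n" by (rule group_W)
  interpret A: group "Aut0 n" by (rule group_Aut0)
  assume g: "g \<in> carrier (W n)"
  show ?thesis
    apply (rule A.inv_equality)
    using g by (auto simp: conjW_mult conjW_one conjW_A0 Aut0_carrier)
qed

lemma subgroup_Inn: "subgroup (Inn n) (Aut0 n)"
proof -
  interpret Wn: group "W n" by (rule group_W)
  interpret A: group "Aut0 n" by (rule group_Aut0)
  show ?thesis
  proof (rule A.subgroupI)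
    show "Inn n \<subseteq> carrier (Aut0 n)" using Inn_sub Aut0_carrier by auto
    show "Inn n \<noteq> {}" unfolding Inn_def by auto
    show "inv\<^bsub>Aut0 n\<^esub> a \<in> Inn n" if "a \<in> Inn n" for a
      using that unfolding Inn_def by (auto simp: conjW_inv)
    show "a \<otimes>\<^bsub>Aut0 n\<^esub> b \<in> Inn n" if "a \<in> Inn n" "b \<in> Inn n" for a b
      using that unfolding Inn_def by (auto simp: conjW_mult)
  qed
qed

lemma A0_facts: "f \<in> A0 n \<Longrightarrow> f \<in> hom (W n) (W n) \<and> f \<in> extensional (carrier (W n))"
  by (auto simp: A0_def auto_def Bij_def)

lemma A0_inv_app:
  assumes f: "f \<in> A0 n" "x \<in> carrier (W n)"
  shows "f ((inv\<^bsub>Aut0 n\<^esub> f) x) = x" "(inv\<^bsub>Aut0 n\<^esub> f) (f x) = x"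
proof -
  interpret A: group "Aut0 n" by (rule group_Aut0)
  have fi: "inv\<^bsub>Aut0 n\<^esub> f \<in> A0 n" using f A.inv_closed Aut0_carrier by auto
  have "f \<otimes>\<^bsub>Aut0 n\<^esub> inv\<^bsub>Aut0 n\<^esub> f = \<one>\<^bsub>Aut0 n\<^esub>" using f Aut0_carrier by simp
  then have "compose (carrier (W n)) f (inv\<^bsub>Aut0 n\<^esub> f) x = x"
    using f fi by (simp add: Aut0_mult Aut0_one)
  then show "f ((inv\<^bsub>Aut0 n\<^esub> f) x) = x" using f by (simp add: compose_def)
  have "inv\<^bsub>Aut0 n\<^esub> f \<otimes>\<^bsub>Aut0 n\<^esub> f = \<one>\<^bsub>Aut0 n\<^esub>" using f Aut0_carrier by simp
  then have "compose (carrier (W n)) (inv\<^bsub>Aut0 n\<^esub> f) f x = x"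
    using f fi by (simp add: Aut0_mult Aut0_one)
  then show "(inv\<^bsub>Aut0 n\<^esub> f) (f x) = x" using f by (simp add: compose_def)
qed

lemma normal_Inn: "Inn n \<lhd> Aut0 n"
proof -
  interpret Wn: group "W n" by (rule group_W)
  interpret A: group "Aut0 n" by (rule group_Aut0)
  show ?thesis
  proof (simp only: A.normal_inv_iff, intro conjI ballI)
    show "subgroup (Inn n) (Aut0 n)" by (rule subgroup_Inn)
    fix f c assume f: "f \<in> carrier (Aut0 n)" and c: "c \<in> Inn n"
    then obtain g where g: "g \<in> carrier (W n)" "c = conjW n g" unfolding Inn_def by auto
    define y where "y = inv\<^bsub>Aut0 n\<^esub> f"
    have fA: "f \<in> A0 n" using f Aut0_carrier by auto
    have yA: "y \<in> A0 n" using f Aut0_carrier y_def A.inv_closed by auto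
    have fh: "f \<in> hom (W n) (W n)" using A0_facts fA by auto
    have yh: "y \<in> hom (W n) (W n)" using A0_facts yA by auto
    have cA: "c \<in> A0 n" using g conjW_A0 by auto
    have fc: "f \<otimes>\<^bsub>Aut0 n\<^esub> c \<in> A0 n" using fA cA Aut0_carrier A.m_closed by metis
    have fg: "f g \<in> carrier (W n)" using fh g hom_W_closed by auto
    have "f \<otimes>\<^bsub>Aut0 n\<^esub> c \<otimes>\<^bsub>Aut0 n\<^esub> y = conjW n (f g)"
    proof -
      have "compose (carrier (W n)) (compose (carrier (W n)) f c) y = conjW n (f g)"
        unfolding compose_def[of _ _ y] conjW_def[of n "f g"]
      proof (rule restrict_ext)
        fix x assume x: "x \<in> carrier (W n)"
        have yx: "y x \<in> carrier (W n)" using yh x hom_W_closed by auto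
        have "f (g \<otimes>\<^bsub>W n\<^esub> y x \<otimes>\<^bsub>W n\<^esub> inv\<^bsub>W n\<^esub> g) = f g \<otimes>\<^bsub>W n\<^esub> f (y x) \<otimes>\<^bsub>W n\<^esub> inv\<^bsub>W n\<^esub> (f g)"
          using g yx fh by (simp add: hom_mult hom_W_inv)
        also have "f (y x) = x" using A0_inv_app(1)[OF fA x] y_def by simp
        finally show "compose (carrier (W n)) f c (y x) = f g \<otimes>\<^bsub>W n\<^esub> x \<otimes>\<^bsub>W n\<^esub> inv\<^bsub>W n\<^esub> (f g)"
          using x yx g by (simp add: compose_def conjW_app)
      qed
      then show ?thesis using fA cA yA fc by (simp add: Aut0_mult)
    qed
    then show "f \<otimes>\<^bsub>Aut0 n\<^esub> c \<otimes>\<^bsub>Aut0 n\<^esub> inv\<^bsub>Aut0 n\<^esub> f \<in> Inn n"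
      using fg y_def unfolding Inn_def by auto
  qed
qed

lemma group_Out0: "group (Out0 n)"
  unfolding Out0_def by (rule normal.factorgroup_is_group[OF normal_Inn])




definition pis :: "nat \<Rightarrow> nat list" where "pis j = (if j \<le> 4 then [j] else [])"
definition pi :: "nat \<Rightarrow> nat list \<Rightarrow> nat list" where
  "pi n = (\<lambda>w\<in>carrier (W n). prodG (W 4) pis w)"
definition redA :: "nat \<Rightarrow> (nat list \<Rightarrow> nat list) \<Rightarrow> (nat list \<Rightarrow> nat list)" where
  "redA n f = (\<lambda>w\<in>carrier (W 4). pi n (f w))"

lemma hom_Wsub: "h \<in> hom (W n) G \<Longrightarrow> 4 \<le> n \<Longrightarrow> h \<in> hom (W 4) G"
  unfolding hom_def apply (drule W4_sub) by (auto simp: W_mult Pi_iff subset_iff)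

lemma hom_Wsub2: "h \<in> hom G (W 4) \<Longrightarrow> 4 \<le> n \<Longrightarrow> h \<in> hom G (W n)"
  unfolding hom_def apply (drule W4_sub) by (auto simp: W_mult Pi_iff subset_iff)

lemma id_hom_W: "(\<lambda>x. x) \<in> hom (W n) (W n)" by (rule homI) auto

lemma hom_comp': "h \<in> hom G H \<Longrightarrow> i \<in> hom H I \<Longrightarrow> (\<lambda>x. i (h x)) \<in> hom G I"
  using hom_compose[of h G H i I] by (simp add: o_def)

lemma ghom_W: "h \<in> hom (W n) (W m) \<Longrightarrow> group_hom (W n) (W m) h"
  by (simp add: group_W group_hom.intro group_hom_axioms.intro)

context fixes n :: nat assumes n4: "4 \<le> n"
begin

lemma pi_hom: "pi n \<in> hom (W n) (W 4)"
  unfolding pi_def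
  by (rule group.ext_hom[OF group_W]) (auto simp: pis_def gen_carrier W_mult W_one W_carrier)

lemma pi_hom': "pi n \<in> hom (W n) (W n)" using hom_Wsub2[OF pi_hom n4] .

lemma pi_gen: "j \<in> {1..n} \<Longrightarrow> pi n [j] = (if j \<le> 4 then [j] else [])"
  by (simp add: pi_def gen_carrier pis_def W_mult W_one)

lemma pi_id: "w \<in> carrier (W 4) \<Longrightarrow> pi n w = w"
  apply (rule hom_unique[OF group_W hom_Wsub[OF pi_hom n4] id_hom_W])
  using n4 by (auto simp: pi_gen)

lemma pi_closed: "w \<in> carrier (W n) \<Longrightarrow> pi n w \<in> carrier (W 4)"
  by (rule hom_in_carrier[OF pi_hom])

lemma pi_conj_big:
  assumes "g \<in> carrier (W n)" "j \<in> {1..n}" "\<not> j \<le> 4"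
  shows "pi n (g \<otimes>\<^bsub>W n\<^esub> [j] \<otimes>\<^bsub>W n\<^esub> inv\<^bsub>W n\<^esub> g) = []"
proof -
  interpret Wn: group "W n" by (rule group_W)
  interpret W4: group "W 4" by (rule group_W)
  interpret P: group_hom "W n" "W 4" "pi n" by (simp add: pi_hom group_hom.intro group_hom_axioms.intro Wn.group_axioms W4.group_axioms)
  have pg: "pi n g \<in> carrier (W 4)" using assms pi_closed by auto
  have "pi n (g \<otimes>\<^bsub>W n\<^esub> [j] \<otimes>\<^bsub>W n\<^esub> inv\<^bsub>W n\<^esub> g) = pi n g \<otimes>\<^bsub>W 4\<^esub> \<one>\<^bsub>W 4\<^esub> \<otimes>\<^bsub>W 4\<^esub> inv\<^bsub>W 4\<^esub> pi n g"
    using assms by (simp add: gen_carrier pi_gen W_one)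
  also have "\<dots> = \<one>\<^bsub>W 4\<^esub>" using pg by simp
  finally show ?thesis by (simp add: W_one)
qed

lemma pi_key:
  assumes f: "f \<in> A0 n" and w: "w \<in> carrier (W n)"
  shows "pi n (f (pi n w)) = pi n (f w)"
proof -
  have fh: "f \<in> hom (W n) (W n)" using f A0_facts by auto
  have h1: "(\<lambda>w. pi n (f (pi n w))) \<in> hom (W n) (W 4)"
    by (rule hom_comp'[OF hom_comp'[OF pi_hom' fh] pi_hom])
  have h2: "(\<lambda>w. pi n (f w)) \<in> hom (W n) (W 4)"
    by (rule hom_comp'[OF fh pi_hom])
  show ?thesis
  proof (rule hom_unique[OF group_W h1 h2 _ w])
    fix j assume j: "j \<in> {1..n}"
    show "pi n (f (pi n [j])) = pi n (f [j])"
    proof (cases "j \<le> 4")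
      case True then show ?thesis using j by (simp add: pi_gen)
    next
      case False
      obtain g where g: "g \<in> carrier (W n)" "f [j] = g \<otimes>\<^bsub>W n\<^esub> [j] \<otimes>\<^bsub>W n\<^esub> inv\<^bsub>W n\<^esub> g"
        using f j unfolding A0_def by blast
      have "f [] = []" using group_hom.hom_one[OF ghom_W[OF fh]] by (simp add: W_one)
      moreover have "pi n [] = []" using group_hom.hom_one[OF ghom_W[OF pi_hom']] by (simp add: W_one)
      ultimately show ?thesis using j False g pi_conj_big by (simp add: pi_gen)
    qed
  qed
qed

lemma redA_hom: "f \<in> A0 n \<Longrightarrow> redA n f \<in> hom (W 4) (W 4)"
proof -
  assume f: "f \<in> A0 n"
  have fh: "f \<in> hom (W n) (W n)" using f A0_facts by auto
  have "(\<lambda>w. pi n (f w)) \<in> hom (W 4) (W 4)"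
    using hom_Wsub[OF hom_comp'[OF fh pi_hom] n4] .
  then show ?thesis unfolding redA_def
    by (simp add: group.hom_restrict group_W)
qed

lemma redA_closed: "f \<in> A0 n \<Longrightarrow> w \<in> carrier (W 4) \<Longrightarrow> redA n f w \<in> carrier (W 4)"
  by (rule hom_in_carrier[OF redA_hom])

lemma redA_comp: "f \<in> A0 n \<Longrightarrow> h \<in> A0 n \<Longrightarrow> w \<in> carrier (W 4) \<Longrightarrow>
   redA n (compose (carrier (W n)) f h) w = redA n f (redA n h w)"
proof -
  assume f: "f \<in> A0 n" and h: "h \<in> A0 n" and w: "w \<in> carrier (W 4)"
  have wn: "w \<in> carrier (W n)" using w W4_sub n4 by auto
  have hw: "h w \<in> carrier (W n)" using hom_in_carrier[OF conjunct1[OF A0_facts[OF h]] wn] .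
  have "redA n (compose (carrier (W n)) f h) w = pi n (f (h w))"
    using w wn by (simp add: redA_def compose_def)
  also have "\<dots> = pi n (f (pi n (h w)))" using pi_key[OF f hw] by simp
  also have "\<dots> = redA n f (redA n h w)"
    using w pi_closed[OF hw] by (simp add: redA_def)
  finally show ?thesis .
qed

lemma redA_one: "redA n (\<lambda>x\<in>carrier (W n). x) = (\<lambda>x\<in>carrier (W 4). x)"
  unfolding redA_def using pi_id W4_sub[OF n4] by (intro restrict_ext) auto

lemma redA_A0: "f \<in> A0 n \<Longrightarrow> redA n f \<in> A0 4"
proof -
  interpret A: group "Aut0 n" by (rule group_Aut0)
  interpret W4: group "W 4" by (rule group_W)
  interpret Wn: group "W n" by (rule group_W)
  interpret P: group_hom "W n" "W 4" "pi n" by (simp add: pi_hom group_hom.intro group_hom_axioms.intro Wn.group_axioms W4.group_axioms)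
  assume f: "f \<in> A0 n"
  define h where "h = inv\<^bsub>Aut0 n\<^esub> f"
  have h: "h \<in> A0 n" using f h_def A.inv_closed Aut0_carrier by auto
  have fh: "f \<in> hom (W n) (W n)" using f A0_facts by auto
  have au: "redA n f \<in> auto (W 4)"
  proof (rule auto_intro[OF redA_hom[OF f], of "redA n h"])
    show "redA n f \<in> extensional (carrier (W 4))" by (simp add: redA_def)
    show "redA n h \<in> carrier (W 4) \<rightarrow> carrier (W 4)" using redA_closed h by auto
    fix x assume x: "x \<in> carrier (W 4)"
    have xn: "x \<in> carrier (W n)" using x W4_sub n4 by auto
    have "redA n h (redA n f x) = redA n (compose (carrier (W n)) h f) x"
      using redA_comp h f x by simp
    also have "\<dots> = pi n x" using x xn A0_inv_app[OF f xn] h_def by (simp add: redA_def compose_def)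
    finally show "redA n h (redA n f x) = x" using pi_id x by simp
    have "redA n f (redA n h x) = redA n (compose (carrier (W n)) f h) x"
      using redA_comp h f x by simp
    also have "\<dots> = pi n x" using x xn A0_inv_app[OF f xn] h_def by (simp add: redA_def compose_def)
    finally show "redA n f (redA n h x) = x" using pi_id x by simp
  qed
  have "\<forall>j\<in>{1..4}. \<exists>g\<in>carrier (W 4). redA n f [j] = g \<otimes>\<^bsub>W 4\<^esub> [j] \<otimes>\<^bsub>W 4\<^esub> inv\<^bsub>W 4\<^esub> g"
  proof
    fix j :: nat assume j: "j \<in> {1..4}"
    then have jn: "j \<in> {1..n}" using n4 by auto
    obtain g where g: "g \<in> carrier (W n)" "f [j] = g \<otimes>\<^bsub>W n\<^esub> [j] \<otimes>\<^bsub>W n\<^esub> inv\<^bsub>W n\<^esub> g"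
      using f jn unfolding A0_def by blast
    have "redA n f [j] = pi n g \<otimes>\<^bsub>W 4\<^esub> [j] \<otimes>\<^bsub>W 4\<^esub> inv\<^bsub>W 4\<^esub> pi n g"
      using g j jn by (simp add: redA_def gen_carrier pi_gen)
    then show "\<exists>g\<in>carrier (W 4). redA n f [j] = g \<otimes>\<^bsub>W 4\<^esub> [j] \<otimes>\<^bsub>W 4\<^esub> inv\<^bsub>W 4\<^esub> g"
      using pi_closed g by blast
  qed
  then show ?thesis using au by (simp add: A0_def)
qed

lemma redA_hom_Aut: "redA n \<in> hom (Aut0 n) (Aut0 4)"
proof (rule homI)
  fix f assume "f \<in> carrier (Aut0 n)"
  then show "redA n f \<in> carrier (Aut0 4)" using redA_A0 by (simp add: Aut0_carrier)
next
  fix f h assume f: "f \<in> carrier (Aut0 n)" and h: "h \<in> carrier (Aut0 n)"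
  then have fa: "f \<in> A0 n" and ha: "h \<in> A0 n" by (auto simp: Aut0_carrier)
  have "redA n (compose (carrier (W n)) f h) = compose (carrier (W 4)) (redA n f) (redA n h)"
  proof (rule ext)
    fix x show "redA n (compose (carrier (W n)) f h) x = compose (carrier (W 4)) (redA n f) (redA n h) x"
    proof (cases "x \<in> carrier (W 4)")
      case True then show ?thesis using redA_comp[OF fa ha True] by (simp add: compose_def)
    next
      case False then show ?thesis by (simp add: compose_def redA_def)
    qed
  qed
  then show "redA n (f \<otimes>\<^bsub>Aut0 n\<^esub> h) = redA n f \<otimes>\<^bsub>Aut0 4\<^esub> redA n h"
    using fa ha redA_A0 by (simp add: Aut0_mult)
qed

lemma redA_conj: "g \<in> carrier (W n) \<Longrightarrow> redA n (conjW n g) = conjW 4 (pi n g)"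
proof -
  interpret W4: group "W 4" by (rule group_W)
  interpret Wn: group "W n" by (rule group_W)
  interpret P: group_hom "W n" "W 4" "pi n" by (simp add: pi_hom group_hom.intro group_hom_axioms.intro Wn.group_axioms W4.group_axioms)
  assume g: "g \<in> carrier (W n)"
  show ?thesis unfolding redA_def conjW_def[of 4]
  proof (rule restrict_ext)
    fix x assume x: "x \<in> carrier (W 4)"
    then have xn: "x \<in> carrier (W n)" using W4_sub n4 by auto
    show "pi n (conjW n g x) = pi n g \<otimes>\<^bsub>W 4\<^esub> x \<otimes>\<^bsub>W 4\<^esub> inv\<^bsub>W 4\<^esub> pi n g"
      using g x xn by (simp add: conjW_app pi_id)
  qed
qed

end



definition ps :: "nat \<Rightarrow> nat \<Rightarrow> nat set \<Rightarrow> nat \<Rightarrow> nat list" where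
  "ps n i D j = (if j \<in> D then [i] \<otimes>\<^bsub>W n\<^esub> [j] \<otimes>\<^bsub>W n\<^esub> [i] else [j])"

lemma pconj_eq: "pconj n i D = (\<lambda>w\<in>carrier (W n). prodG (W n) (ps n i D) w)"
  by (simp add: pconj_def ps_def[abs_def] extW_eq)

lemma hom_ext_eq:
  assumes "f \<in> hom (W m) (W m)" "g \<in> hom (W m) (W m)"
    "f \<in> extensional (carrier (W m))" "g \<in> extensional (carrier (W m))"
    "\<And>j. j \<in> {1..m} \<Longrightarrow> f [j] = g [j]"
  shows "f = g"
  using hom_unique[OF group_W assms(1,2,5)] assms(3,4) by (intro extensionalityI) auto

context fixes n i :: nat and D :: "nat set" assumes i: "i \<in> {1..n}" and D: "D \<subseteq> {1..n}" "i \<notin> D"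
begin

lemma ps_props: "j \<in> {1..n} \<Longrightarrow> ps n i D j \<in> carrier (W n) \<and> ps n i D j \<otimes>\<^bsub>W n\<^esub> ps n i D j = \<one>\<^bsub>W n\<^esub>"
proof -
  interpret Wn: group "W n" by (rule group_W)
  assume j: "j \<in> {1..n}"
  have gi: "[i] \<in> carrier (W n)" and gj: "[j] \<in> carrier (W n)" using i j gen_carrier by auto
  have "[i] \<otimes>\<^bsub>W n\<^esub> [j] \<otimes>\<^bsub>W n\<^esub> [i] \<otimes>\<^bsub>W n\<^esub> ([i] \<otimes>\<^bsub>W n\<^esub> [j] \<otimes>\<^bsub>W n\<^esub> [i]) = \<one>\<^bsub>W n\<^esub>"
    using gi gj by (simp add: Wn.m_assoc gen_sq[of i n, symmetric] del: gen_sq) (simp add: Wn.m_assoc[symmetric] gen_sq)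
  then show ?thesis using gi gj by (auto simp: ps_def gen_sq)
qed

lemma pconj_hom: "pconj n i D \<in> hom (W n) (W n)"
  unfolding pconj_eq by (rule group.ext_hom[OF group_W ps_props])

lemma pconj_gen: "j \<in> {1..n} \<Longrightarrow> pconj n i D [j] = ps n i D j"
  using ps_props[of j] by (auto simp: pconj_eq gen_carrier monoid.r_one[OF group.is_monoid[OF group_W]])

lemma pconj_invol: "x \<in> carrier (W n) \<Longrightarrow> pconj n i D (pconj n i D x) = x"
proof -
  interpret Wn: group "W n" by (rule group_W)
  assume x: "x \<in> carrier (W n)"
  show ?thesis
  proof (rule hom_unique[OF group_W hom_comp'[OF pconj_hom pconj_hom] id_hom_W _ x])
    fix j assume j: "j \<in> {1..n}"
    have gi: "[i] \<in> carrier (W n)" and gj: "[j] \<in> carrier (W n)" using i j gen_carrier by auto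
    show "pconj n i D (pconj n i D [j]) = [j]"
    proof (cases "j \<in> D")
      case True
      have "pconj n i D (pconj n i D [j]) = [i] \<otimes>\<^bsub>W n\<^esub> ([i] \<otimes>\<^bsub>W n\<^esub> [j] \<otimes>\<^bsub>W n\<^esub> [i]) \<otimes>\<^bsub>W n\<^esub> [i]"
        using True j i D gi gj by (simp add: pconj_gen ps_def hom_mult[OF pconj_hom])
      also have "\<dots> = [j]" using gi gj
        by (simp add: Wn.m_assoc gen_sq[of i n, symmetric] del: gen_sq) (simp add: Wn.m_assoc[symmetric] gen_sq)
      finally show ?thesis .
    qed (use j in \<open>simp add: pconj_gen ps_def\<close>)
  qed
qed

lemma pconj_A0: "pconj n i D \<in> A0 n"
proof -
  interpret Wn: group "W n" by (rule group_W)
  have gi: "[i] \<in> carrier (W n)" using i gen_carrier by auto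
  have au: "pconj n i D \<in> auto (W n)"
  proof (rule auto_intro[OF pconj_hom _ _ pconj_invol pconj_invol])
    show "pconj n i D \<in> extensional (carrier (W n))" by (simp add: pconj_eq)
    show "pconj n i D \<in> carrier (W n) \<rightarrow> carrier (W n)" using hom_in_carrier[OF pconj_hom] by blast
  qed
  have "\<forall>j\<in>{1..n}. \<exists>g\<in>carrier (W n). pconj n i D [j] = g \<otimes>\<^bsub>W n\<^esub> [j] \<otimes>\<^bsub>W n\<^esub> inv\<^bsub>W n\<^esub> g"
  proof
    fix j assume j: "j \<in> {1..n}"
    have "inv\<^bsub>W n\<^esub> [i] = [i]" using gi by (simp add: W_inv)
    then show "\<exists>g\<in>carrier (W n). pconj n i D [j] = g \<otimes>\<^bsub>W n\<^esub> [j] \<otimes>\<^bsub>W n\<^esub> inv\<^bsub>W n\<^esub> g"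
    proof (cases "j \<in> D")
      case True then show ?thesis
        using j gi gen_carrier[OF j] \<open>inv\<^bsub>W n\<^esub> [i] = [i]\<close> by (auto simp: pconj_gen ps_def intro!: bexI[of _ "[i]"])
    next
      case False then show ?thesis
        using j gi gen_carrier[OF j] by (auto simp: pconj_gen ps_def intro!: bexI[of _ "\<one>\<^bsub>W n\<^esub>"])
    qed
  qed
  then show ?thesis using au by (simp add: A0_def)
qed

end




lemma id_ext: "(\<lambda>x\<in>carrier (W m). x) \<in> hom (W m) (W m)"
  by (rule homI) (auto simp: group.subgroup_self group_W subgroup.m_closed)

lemma pconj4_empty: "i \<in> {1..4} \<Longrightarrow> pconj 4 i {} = (\<lambda>x\<in>carrier (W 4). x)"
  apply (rule hom_ext_eq[OF pconj_hom id_ext])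
  by (auto simp: pconj_eq pconj_gen gen_carrier ps_def W_one W_mult)

lemma pconj4_full: "i \<in> {1..4} \<Longrightarrow> pconj 4 i ({1..4} - {i}) = conjW 4 [i]"
proof -
  interpret W4: group "W 4" by (rule group_W)
  assume i: "i \<in> {1..4}"
  have gi: "[i] \<in> carrier (W 4)" using i gen_carrier by auto
  have iv: "inv\<^bsub>W 4\<^esub> [i] = [i]" using gi by (simp add: W_inv)
  show ?thesis
  proof (rule hom_ext_eq[OF pconj_hom conjW_hom[OF gi]])
    show "pconj 4 i ({1..4} - {i}) \<in> extensional (carrier (W 4))" by (simp add: pconj_eq)
    show "conjW 4 [i] \<in> extensional (carrier (W 4))" by (simp add: conjW_def)
    fix j :: nat assume j: "j \<in> {1..4}"
    show "pconj 4 i ({1..4} - {i}) [j] = conjW 4 [i] [j]"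
    proof (cases "j = i")
      case True then show ?thesis using i gi iv j
        by (simp add: pconj_gen ps_def conjW_app W4.m_assoc gen_sq)
    next
      case False then show ?thesis using i gi iv j gen_carrier[OF j]
        by (simp add: pconj_gen ps_def conjW_app)
    qed
  qed (use i in auto)
qed

definition Phi :: "nat \<Rightarrow> (nat list \<Rightarrow> nat list) \<Rightarrow> (nat list \<Rightarrow> nat list) set" where
  "Phi n f = r_coset (Aut0 4) (Inn 4) (redA n f)"

context fixes n :: nat assumes n4: "4 \<le> n"
begin

lemma redA_pconj:
  assumes i: "i \<in> {1..n}" and D: "D \<subseteq> {1..n}" "i \<notin> D"
  shows "redA n (pconj n i D) = (if i \<le> 4 then pconj 4 i (D \<inter> {1..4}) else (\<lambda>x\<in>carrier (W 4). x))"
proof -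
  interpret W4: group "W 4" by (rule group_W)
  interpret Wn: group "W n" by (rule group_W)
  have A: "pconj n i D \<in> A0 n" by (rule pconj_A0[OF i D])
  have gi: "[i] \<in> carrier (W n)" using i gen_carrier by auto
  have rg: "redA n (pconj n i D) [j] = pi n (ps n i D j)" if j: "j \<in> {1..4}" for j
    using j n4 by (simp add: redA_def gen_carrier pconj_gen[OF i D])
  have pm: "pi n ([i] \<otimes>\<^bsub>W n\<^esub> [j] \<otimes>\<^bsub>W n\<^esub> [i]) = pi n [i] \<otimes>\<^bsub>W 4\<^esub> [j] \<otimes>\<^bsub>W 4\<^esub> pi n [i]"
    if j: "j \<in> {1..4}" for j
  proof -
    have gj: "[j] \<in> carrier (W n)" using j n4 gen_carrier by auto
    show ?thesis using gi gj j n4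
      by (simp add: hom_mult[OF pi_hom[OF n4]] pi_gen[OF n4])
  qed
  show ?thesis
  proof (cases "i \<le> 4")
    case True
    have i4: "i \<in> {1..4}" using i True by auto
    have pii: "pi n [i] = [i]" using i True pi_gen[OF n4 i] by simp
    have "redA n (pconj n i D) = pconj 4 i (D \<inter> {1..4})"
    proof (rule hom_ext_eq[OF redA_hom[OF n4 A] pconj_hom])
      show "redA n (pconj n i D) \<in> extensional (carrier (W 4))" by (simp add: redA_def)
      show "pconj 4 i (D \<inter> {1..4}) \<in> extensional (carrier (W 4))" by (simp add: pconj_eq)
      fix j :: nat assume j: "j \<in> {1..4}"
      then have jn: "j \<in> {1..n}" using n4 by auto
      show "redA n (pconj n i D) [j] = pconj 4 i (D \<inter> {1..4}) [j]"
        using rg[OF j] pm[OF j] j jn i4 D True pii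
        by (simp add: pconj_gen ps_def pi_gen[OF n4])
    qed (use i4 D in auto)
    then show ?thesis using True by simp
  next
    case False
    have "redA n (pconj n i D) = (\<lambda>x\<in>carrier (W 4). x)"
    proof (rule hom_ext_eq[OF redA_hom[OF n4 A] id_ext])
      show "redA n (pconj n i D) \<in> extensional (carrier (W 4))" by (simp add: redA_def)
      fix j :: nat assume j: "j \<in> {1..4}"
      then have jn: "j \<in> {1..n}" using n4 by auto
      show "redA n (pconj n i D) [j] = (\<lambda>x\<in>carrier (W 4). x) [j]"
        using rg[OF j] pm[OF j] j jn i False gen_carrier[OF j]
        by (simp add: ps_def pi_gen[OF n4] W_mult)
    qed auto
    then show ?thesis using False by simp
  qed
qed

lemma Phi_hom: "Phi n \<in> hom (Aut0 n) (Out0 4)"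
  using hom_compose[OF redA_hom_Aut[OF n4] normal.r_coset_hom_Mod[OF normal_Inn]]
  by (simp add: Phi_def[abs_def] o_def Out0_def)

lemma Phi_Inn: "c \<in> Inn n \<Longrightarrow> Phi n c = \<one>\<^bsub>Out0 4\<^esub>"
proof -
  assume "c \<in> Inn n"
  then obtain g where g: "g \<in> carrier (W n)" "c = conjW n g" unfolding Inn_def by auto
  have "conjW 4 (pi n g) \<in> Inn 4" using pi_closed[OF n4 g(1)] unfolding Inn_def by auto
  then show ?thesis using g redA_conj[OF n4]
    by (simp add: Phi_def Out0_def subgroup.rcos_const[OF subgroup_Inn group_Aut0])
qed

lemma phi_exists: "\<exists>\<phi>. \<phi> \<in> hom (Out0 n) (Out0 4) \<and>
   (\<forall>f\<in>carrier (Aut0 n). \<phi> (r_coset (Aut0 n) (Inn n) f) = Phi n f)"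
proof -
  interpret GH: group_hom "Aut0 n" "Out0 4" "Phi n"
    by (simp add: group_hom.intro group_hom_axioms.intro group_Aut0 group_Out0 Phi_hom)
  have "Inn n \<subseteq> kernel (Aut0 n) (Out0 4) (Phi n)"
    using Phi_Inn Inn_sub Aut0_carrier by (auto simp: kernel_def)
  then obtain g where "g \<in> hom (Aut0 n Mod Inn n) (Out0 4)"
     "\<And>x. x \<in> carrier (Aut0 n) \<Longrightarrow> g (r_coset (Aut0 n) (Inn n) x) = Phi n x"
    using GH.FactGroup_universal_kernel[OF normal_Inn] by metis
  then show ?thesis unfolding Out0_def by auto
qed

end



definition par :: "nat list \<Rightarrow> bool" where "par w = odd (count_list w 1)"

lemma par_Cons[simp]: "par (a # w) = ((a = 1) \<noteq> par w)" by (simp add: par_def)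
lemma par_Nil[simp]: "\<not> par []" by (simp add: par_def)
lemma par_append[simp]: "par (u @ v) = (par u \<noteq> par v)" by (simp add: par_def)
lemma par_rev[simp]: "par (rev u) = par u" by (simp add: par_def)

lemma par_red_cons: "par (red_cons a w) = ((a = 1) \<noteq> par w)"
  by (cases w) auto

lemma par_act: "par (act u v) = (par u \<noteq> par v)"
  by (induction u) (auto simp: par_red_cons)

lemma par_mult: "par (x \<otimes>\<^bsub>W m\<^esub> y) = (par x \<noteq> par y)" by (simp add: W_mult par_act)
lemma par_inv: "x \<in> carrier (W m) \<Longrightarrow> par (inv\<^bsub>W m\<^esub> x) = par x" by (simp add: W_inv)

lemma rd_tl: "rd (a # w) \<Longrightarrow> rd w" by (cases w) auto

lemma rd_rev: "rd w \<Longrightarrow> rd (rev w)" by (simp add: rd_sym)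

lemma act_concat: "rd (u @ v) \<Longrightarrow> act u v = u @ v"
proof (induction u)
  case Nil then show ?case by simp
next
  case (Cons a u)
  have r: "rd (u @ v)" using Cons.prems rd_tl by simp
  then have "act u v = u @ v" using Cons.IH by simp
  then show ?case using Cons.prems by (cases "u @ v") (auto simp: successively_Cons)
qed

definition half :: "nat list \<Rightarrow> nat list" where "half w = take (length w div 2) w"

lemma half_basic:
  assumes g: "rd g" and l: "g = [] \<or> last g \<noteq> 2"
  shows "act (act g [2]) (rev g) = g @ 2 # rev g" "half (g @ 2 # rev g) = g"
proof -
  have r1: "rd (g @ [2])" using g l by (auto simp: successively_append_iff)
  have r3: "rd (2 # rev g)" using rd_rev[OF g] l by (cases "rev g") (auto simp: successively_Cons)
  have r2: "rd ((g @ [2]) @ rev g)" using g l r1 r3 successively_append_iff[of _ "g @ [2]" "rev g"]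
    by (auto simp: successively_append_iff hd_rev)
  show "act (act g [2]) (rev g) = g @ 2 # rev g"
    using act_concat[OF r1] act_concat[OF r2] by simp
  show "half (g @ 2 # rev g) = g" by (simp add: half_def)
qed

lemma half_conj:
  assumes g: "g \<in> carrier (W m)" and m: "2 \<le> m"
  shows "par (half (g \<otimes>\<^bsub>W m\<^esub> [2] \<otimes>\<^bsub>W m\<^esub> inv\<^bsub>W m\<^esub> g)) = par g"
proof (cases "g = [] \<or> last g \<noteq> 2")
  case True
  have "rd g" using g by (simp add: W_carrier)
  then show ?thesis using half_basic[OF _ True] g by (simp add: W_mult W_inv)
next
  case False
  interpret Wm: group "W m" by (rule group_W)
  have g2: "[2] \<in> carrier (W m)" using m gen_carrier by auto
  then obtain g' where g': "g = g' @ [2]" using False by (metis append_butlast_last_id)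
  have rg: "rd g" using g by (simp add: W_carrier)
  have rg': "rd g'" and l': "g' = [] \<or> last g' \<noteq> 2" using rg g' by (auto simp: successively_append_iff)
  have gc': "g' \<in> carrier (W m)" using g g' rg' by (simp add: W_carrier)
  have "g = g' \<otimes>\<^bsub>W m\<^esub> [2]" using act_concat[of g' "[2]"] rg g' by (simp add: W_mult)
  moreover have "g' \<otimes>\<^bsub>W m\<^esub> ([2] \<otimes>\<^bsub>W m\<^esub> [2] \<otimes>\<^bsub>W m\<^esub> inv\<^bsub>W m\<^esub> [2]) \<otimes>\<^bsub>W m\<^esub> inv\<^bsub>W m\<^esub> g'
     = (g' \<otimes>\<^bsub>W m\<^esub> [2]) \<otimes>\<^bsub>W m\<^esub> [2] \<otimes>\<^bsub>W m\<^esub> inv\<^bsub>W m\<^esub> (g' \<otimes>\<^bsub>W m\<^esub> [2])"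
    by (rule Wm.conj_comp[OF gc' g2 g2])
  moreover have "[2] \<otimes>\<^bsub>W m\<^esub> [2] \<otimes>\<^bsub>W m\<^esub> inv\<^bsub>W m\<^esub> [2] = [2]"
    using g2 by (simp add: W_inv W_mult)
  ultimately have e: "g \<otimes>\<^bsub>W m\<^esub> [2] \<otimes>\<^bsub>W m\<^esub> inv\<^bsub>W m\<^esub> g = g' \<otimes>\<^bsub>W m\<^esub> [2] \<otimes>\<^bsub>W m\<^esub> inv\<^bsub>W m\<^esub> g'"
    by simp
  have "par (half (g' \<otimes>\<^bsub>W m\<^esub> [2] \<otimes>\<^bsub>W m\<^esub> inv\<^bsub>W m\<^esub> g')) = par g'"
    using half_basic[OF rg' l'] gc' by (simp add: W_mult W_inv)
  then show ?thesis using e g' by simp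
qed


lemma act_right:
  assumes "rd g"
  shows "act g [a] = (if g \<noteq> [] \<and> last g = a then butlast g else g @ [a])"
proof (cases "g \<noteq> [] \<and> last g = a")
  case True
  then obtain g' where g': "g = g' @ [a]" by (metis append_butlast_last_id)
  have "rd g'" using assms g' by (auto simp: successively_append_iff)
  then have "act g [a] = g'" using g' act_self by (simp add: foldr_append)
  then show ?thesis using True g' by simp
next
  case False
  have "rd (g @ [a])" using assms False by (auto simp: successively_append_iff)
  then have "act g [a] = g @ [a]" by (rule act_concat)
  then show ?thesis using False by auto
qed

lemma centralizer:
  assumes g: "g \<in> carrier (W m)" and c: "g \<otimes>\<^bsub>W m\<^esub> [a] = [a] \<otimes>\<^bsub>W m\<^esub> g"
  shows "g = [] \<or> g = [a]"
proof (rule ccontr)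
  assume ne: "\<not> (g = [] \<or> g = [a])"
  have rg: "rd g" using g by (simp add: W_carrier)
  have L: "[a] \<otimes>\<^bsub>W m\<^esub> g = (if hd g = a then tl g else a # g)" using ne by (cases g) (auto simp: W_mult)
  have R: "g \<otimes>\<^bsub>W m\<^esub> [a] = (if last g = a then butlast g else g @ [a])" using ne act_right[OF rg] by (simp add: W_mult)
  have eq: "(if last g = a then butlast g else g @ [a]) = (if hd g = a then tl g else a # g)"
    using c L R by simp
  show False
  proof (cases "hd g = a")
    case True note h = True
    show False
    proof (cases "last g = a")
      case True
      obtain x y r where xyr: "g = x # y # r" using ne h by (cases g; cases "tl g") auto
      then have "butlast g = x # butlast (y # r)" by simp
      then have "y = x" using eq True h xyr by auto
      then show False using rg xyr by simp
    next
      case False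
      then show False using eq h ne by (metis length_append_singleton length_tl lessI less_imp_diff_less not_less_iff_gr_or_eq list.size(3) length_greater_0_conv neq_Nil_conv nat_less_le diff_le_self)
    qed
  next
    case False note h = False
    show False
    proof (cases "last g = a")
      case True
      have "length (butlast g) = length (a # g)" using eq True h by simp
      then show False by simp
    next
      case False
      have "hd (g @ [a]) = a" using eq False h by simp
      then show False using h ne by (cases g) auto
    qed
  qed
qed

lemma par_A0:
  assumes f: "f \<in> A0 m" and x: "x \<in> carrier (W m)"
  shows "par (f x) = par x"
  using x
proof (induction x)
  case Nil
  have "f [] = []" using group_hom.hom_one[OF ghom_W[OF conjunct1[OF A0_facts[OF f]]]] by (simp add: W_one)
  then show ?case by simp
next
  case (Cons a w)
  interpret Wm: group "W m" by (rule group_W)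
  from W_Cons[OF Cons.prems] have e: "a # w = [a] \<otimes>\<^bsub>W m\<^esub> w" and w: "w \<in> carrier (W m)" and a: "a \<in> {1..m}" by auto
  have fh: "f \<in> hom (W m) (W m)" using A0_facts[OF f] by simp
  obtain g where g: "g \<in> carrier (W m)" "f [a] = g \<otimes>\<^bsub>W m\<^esub> [a] \<otimes>\<^bsub>W m\<^esub> inv\<^bsub>W m\<^esub> g"
    using f a unfolding A0_def by blast
  have "f (a # w) = f [a] \<otimes>\<^bsub>W m\<^esub> f w" using e hom_mult[OF fh gen_carrier[OF a] w] by simp
  moreover have "par (f [a]) = par [a]" using g by (cases "par g") (auto simp: par_mult par_inv)
  ultimately have "par (f (a # w)) = (par [a] \<noteq> par (f w))" by (simp add: par_mult)
  then show ?case using Cons.IH[OF w] by simp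
qed

definition eps :: "(nat list \<Rightarrow> nat list) \<Rightarrow> bool" where "eps f = par (half (f [2]))"

lemma eps_conj: "g \<in> carrier (W 4) \<Longrightarrow> f [2] = g \<otimes>\<^bsub>W 4\<^esub> [2] \<otimes>\<^bsub>W 4\<^esub> inv\<^bsub>W 4\<^esub> g \<Longrightarrow> eps f = par g"
  using half_conj[of g 4] by (simp add: eps_def)

lemma eps_ex: "f \<in> A0 4 \<Longrightarrow> \<exists>g\<in>carrier (W 4). f [2] = g \<otimes>\<^bsub>W 4\<^esub> [2] \<otimes>\<^bsub>W 4\<^esub> inv\<^bsub>W 4\<^esub> g"
  unfolding A0_def by auto

lemma eps_mult:
  assumes f: "f \<in> A0 4" and h: "h \<in> A0 4"
  shows "eps (f \<otimes>\<^bsub>Aut0 4\<^esub> h) = (eps f \<noteq> eps h)"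
proof -
  interpret W4: group "W 4" by (rule group_W)
  obtain gf where gf: "gf \<in> carrier (W 4)" "f [2] = gf \<otimes>\<^bsub>W 4\<^esub> [2] \<otimes>\<^bsub>W 4\<^esub> inv\<^bsub>W 4\<^esub> gf"
    using eps_ex[OF f] by blast
  obtain gh where gh: "gh \<in> carrier (W 4)" "h [2] = gh \<otimes>\<^bsub>W 4\<^esub> [2] \<otimes>\<^bsub>W 4\<^esub> inv\<^bsub>W 4\<^esub> gh"
    using eps_ex[OF h] by blast
  have fh: "f \<in> hom (W 4) (W 4)" using A0_facts[OF f] by simp
  have g2: "[2] \<in> carrier (W 4)" by (simp add: gen_carrier)
  have fgh: "f gh \<in> carrier (W 4)" using hom_in_carrier[OF fh gh(1)] .
  have "(f \<otimes>\<^bsub>Aut0 4\<^esub> h) [2] = f (h [2])" using f h g2 by (simp add: Aut0_mult compose_def)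
  also have "\<dots> = f gh \<otimes>\<^bsub>W 4\<^esub> f [2] \<otimes>\<^bsub>W 4\<^esub> inv\<^bsub>W 4\<^esub> (f gh)"
    using gh g2 by (simp add: hom_mult[OF fh] hom_W_inv[OF fh])
  also have "\<dots> = (f gh \<otimes>\<^bsub>W 4\<^esub> gf) \<otimes>\<^bsub>W 4\<^esub> [2] \<otimes>\<^bsub>W 4\<^esub> inv\<^bsub>W 4\<^esub> (f gh \<otimes>\<^bsub>W 4\<^esub> gf)"
    using gf fgh g2 by (simp add: W4.conj_comp)
  finally have "eps (f \<otimes>\<^bsub>Aut0 4\<^esub> h) = par (f gh \<otimes>\<^bsub>W 4\<^esub> gf)"
    using fgh gf by (intro eps_conj) auto
  then show ?thesis using eps_conj[of gf f, OF gf] eps_conj[of gh h, OF gh] par_A0[OF f gh(1)] by (auto simp: par_mult)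
qed




definition Stab :: "(nat list \<Rightarrow> nat list) set" where "Stab = {f \<in> A0 4. f [1] = [1]}"
definition ee :: "bool \<Rightarrow> nat list" where "ee b = (if b then [1] else [])"
definition Fs :: "nat \<Rightarrow> (nat list \<Rightarrow> nat list) \<Rightarrow> nat \<Rightarrow> nat list" where
  "Fs n f j = (if j \<le> 4 then f [j] else ee (eps f) \<otimes>\<^bsub>W n\<^esub> [j] \<otimes>\<^bsub>W n\<^esub> ee (eps f))"
definition Fm :: "nat \<Rightarrow> (nat list \<Rightarrow> nat list) \<Rightarrow> (nat list \<Rightarrow> nat list)" where
  "Fm n f = (\<lambda>w\<in>carrier (W n). prodG (W n) (Fs n f) w)"

lemma ee_carrier: "1 \<le> m \<Longrightarrow> ee b \<in> carrier (W m)" by (simp add: ee_def W_carrier)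
lemma ee_mult: "ee a \<otimes>\<^bsub>W m\<^esub> ee b = ee (a \<noteq> b)" by (simp add: ee_def W_mult)
lemma ee_inv: "1 \<le> m \<Longrightarrow> inv\<^bsub>W m\<^esub> (ee b) = ee b" by (simp add: ee_def W_inv W_carrier)
lemma ee_False: "ee False = \<one>\<^bsub>W m\<^esub>" by (simp add: ee_def W_one)

lemma (in group) sq_conj:
  assumes "x \<in> carrier G" "y \<in> carrier G" "x \<otimes> x = \<one>" "y \<otimes> y = \<one>"
  shows "(x \<otimes> y \<otimes> x) \<otimes> (x \<otimes> y \<otimes> x) = \<one>"
proof -
  have xx: "x \<otimes> (x \<otimes> z) = z" if "z \<in> carrier G" for z
    using assms that m_assoc[symmetric, of x x z] by simp
  have yy: "y \<otimes> (y \<otimes> z) = z" if "z \<in> carrier G" for z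
    using assms that m_assoc[symmetric, of y y z] by simp
  show ?thesis using assms by (simp add: m_assoc xx yy)
qed

lemma Stab_A0: "f \<in> Stab \<Longrightarrow> f \<in> A0 4" by (simp add: Stab_def)

context fixes n :: nat assumes n4: "4 \<le> n"
begin

lemma Fs_props:
  assumes f: "f \<in> A0 4" and j: "j \<in> {1..n}"
  shows "Fs n f j \<in> carrier (W n) \<and> Fs n f j \<otimes>\<^bsub>W n\<^esub> Fs n f j = \<one>\<^bsub>W n\<^esub>"
proof (cases "j \<le> 4")
  case True
  interpret W4: group "W 4" by (rule group_W)
  have fh: "f \<in> hom (W 4) (W 4)" using A0_facts[OF f] by simp
  have j4: "j \<in> {1..4}" using j True by auto
  have c: "f [j] \<in> carrier (W 4)" using hom_in_carrier[OF fh gen_carrier[OF j4]] .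
  have "f [j] \<otimes>\<^bsub>W 4\<^esub> f [j] = f ([j] \<otimes>\<^bsub>W 4\<^esub> [j])" using hom_mult[OF fh gen_carrier[OF j4] gen_carrier[OF j4]] by simp
  also have "\<dots> = \<one>\<^bsub>W 4\<^esub>" using group_hom.hom_one[OF ghom_W[OF fh]] by (simp add: gen_sq)
  finally show ?thesis using c True W4_sub[OF n4] by (auto simp: Fs_def W_mult W_one)
next
  case False
  interpret Wn: group "W n" by (rule group_W)
  have e: "ee (eps f) \<in> carrier (W n)" using n4 ee_carrier by simp
  show ?thesis using False Wn.sq_conj[OF e gen_carrier[OF j]] e gen_carrier[OF j]
    by (simp add: Fs_def ee_mult ee_False gen_sq)
qed

lemma Fm_hom: "f \<in> A0 4 \<Longrightarrow> Fm n f \<in> hom (W n) (W n)"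
  unfolding Fm_def by (rule group.ext_hom[OF group_W Fs_props])

lemma Fm_gen: "f \<in> A0 4 \<Longrightarrow> j \<in> {1..n} \<Longrightarrow> Fm n f [j] = Fs n f j"
  using Fs_props[of f j] by (auto simp: Fm_def gen_carrier monoid.r_one[OF group.is_monoid[OF group_W]])

lemma Fm_W4: "f \<in> A0 4 \<Longrightarrow> w \<in> carrier (W 4) \<Longrightarrow> Fm n f w = f w"
proof -
  assume f: "f \<in> A0 4" and w: "w \<in> carrier (W 4)"
  have fh: "f \<in> hom (W 4) (W 4)" using A0_facts[OF f] by simp
  show ?thesis
    apply (rule hom_unique[OF group_W hom_Wsub[OF Fm_hom[OF f] n4] hom_Wsub2[OF fh n4] _ w])
    using n4 by (auto simp: Fm_gen[OF f] Fs_def)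
qed

lemma Fm_ext: "Fm n f \<in> extensional (carrier (W n))" by (simp add: Fm_def)

lemma Fm_mult:
  assumes f: "f \<in> Stab" and h: "h \<in> Stab"
  shows "Fm n (f \<otimes>\<^bsub>Aut0 4\<^esub> h) = compose (carrier (W n)) (Fm n f) (Fm n h)"
proof -
  interpret Wn: group "W n" by (rule group_W)
  interpret A4: group "Aut0 4" by (rule group_Aut0)
  have fa: "f \<in> A0 4" and ha: "h \<in> A0 4" using f h by (auto simp: Stab_def)
  have fha: "f \<otimes>\<^bsub>Aut0 4\<^esub> h \<in> A0 4" using A4.m_closed fa ha by (simp add: Aut0_carrier)
  have fh: "f \<in> hom (W 4) (W 4)" using A0_facts[OF fa] by simp
  have hh: "h \<in> hom (W 4) (W 4)" using A0_facts[OF ha] by simp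
  have ch: "compose (carrier (W n)) (Fm n f) (Fm n h) \<in> hom (W n) (W n)"
    using hom_compose[OF Fm_hom[OF ha] Fm_hom[OF fa]] by (simp add: compose_def o_def Wn.hom_restrict)
  have Fe: "Fm n f (ee b) = ee b" for b
  proof -
    have "f [] = []" using group_hom.hom_one[OF ghom_W[OF fh]] by (simp add: W_one)
    then show ?thesis using f Fm_W4[OF fa] ee_carrier[of 4 b] by (auto simp: ee_def Stab_def)
  qed
  show ?thesis
  proof (rule hom_ext_eq[OF Fm_hom[OF fha] ch Fm_ext])
    show "compose (carrier (W n)) (Fm n f) (Fm n h) \<in> extensional (carrier (W n))"
      by (simp add: compose_def)
    fix j assume j: "j \<in> {1..n}"
    show "Fm n (f \<otimes>\<^bsub>Aut0 4\<^esub> h) [j] = compose (carrier (W n)) (Fm n f) (Fm n h) [j]"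
    proof (cases "j \<le> 4")
      case True
      then have j4: "j \<in> {1..4}" using j by auto
      have hj: "h [j] \<in> carrier (W 4)" using hom_in_carrier[OF hh gen_carrier[OF j4]] .
      have "Fm n (f \<otimes>\<^bsub>Aut0 4\<^esub> h) [j] = (f \<otimes>\<^bsub>Aut0 4\<^esub> h) [j]"
        by (simp add: Fm_gen[OF fha j] Fs_def True)
      also have "\<dots> = f (h [j])" using fa ha gen_carrier[OF j4] by (simp add: Aut0_mult compose_def)
      finally show ?thesis using True j j4 hj fa ha Fm_W4[OF fa hj]
        by (simp add: Fm_gen[OF ha] Fs_def compose_def gen_carrier)
    next
      case False
      have e: "\<And>b. ee b \<in> carrier (W n)" using n4 ee_carrier by simp
      have gj: "[j] \<in> carrier (W n)" using gen_carrier[OF j] .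
      have "compose (carrier (W n)) (Fm n f) (Fm n h) [j] = Fm n f (ee (eps h) \<otimes>\<^bsub>W n\<^esub> [j] \<otimes>\<^bsub>W n\<^esub> ee (eps h))"
        using False gj by (simp add: compose_def Fm_gen[OF ha j] Fs_def)
      also have "\<dots> = ee (eps h) \<otimes>\<^bsub>W n\<^esub> (ee (eps f) \<otimes>\<^bsub>W n\<^esub> [j] \<otimes>\<^bsub>W n\<^esub> ee (eps f)) \<otimes>\<^bsub>W n\<^esub> ee (eps h)"
        using e gj False by (simp add: hom_mult[OF Fm_hom[OF fa]] Fe Fm_gen[OF fa j] Fs_def)
      also have "\<dots> = (ee (eps h) \<otimes>\<^bsub>W n\<^esub> ee (eps f)) \<otimes>\<^bsub>W n\<^esub> [j] \<otimes>\<^bsub>W n\<^esub> (ee (eps f) \<otimes>\<^bsub>W n\<^esub> ee (eps h))"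
        using e gj by (simp add: Wn.m_assoc)
      also have "\<dots> = Fm n (f \<otimes>\<^bsub>Aut0 4\<^esub> h) [j]"
        using False eps_mult[OF fa ha] by (cases "eps f"; cases "eps h") (simp_all add: Fm_gen[OF fha j] Fs_def ee_mult)
      finally show ?thesis by simp
    qed
  qed
qed

end



lemma one4_A0: "\<one>\<^bsub>Aut0 m\<^esub> \<in> A0 m"
proof -
  interpret A: group "Aut0 m" by (rule group_Aut0)
  show ?thesis using A.one_closed by (simp add: Aut0_carrier)
qed

lemma Stab_one: "\<one>\<^bsub>Aut0 4\<^esub> \<in> Stab"
  using one4_A0 by (simp add: Stab_def Aut0_one gen_carrier)

lemma Stab_mult: "f \<in> Stab \<Longrightarrow> h \<in> Stab \<Longrightarrow> f \<otimes>\<^bsub>Aut0 4\<^esub> h \<in> Stab"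
proof -
  interpret A: group "Aut0 4" by (rule group_Aut0)
  assume "f \<in> Stab" "h \<in> Stab"
  then show ?thesis using A.m_closed[of f h]
    by (auto simp: Stab_def Aut0_carrier Aut0_mult compose_def gen_carrier)
qed

lemma Stab_inv: "f \<in> Stab \<Longrightarrow> inv\<^bsub>Aut0 4\<^esub> f \<in> Stab"
proof -
  assume f: "f \<in> Stab"
  then have fa: "f \<in> A0 4" by (simp add: Stab_def)
  have "(inv\<^bsub>Aut0 4\<^esub> f) (f [1]) = [1]" using A0_inv_app(2)[OF fa gen_carrier] by simp
  then show ?thesis using f group.inv_closed[OF group_Aut0, of f 4] by (auto simp: Stab_def Aut0_carrier)
qed

lemma eps_one: "\<not> eps \<one>\<^bsub>Aut0 4\<^esub>"
proof -
  interpret W4: group "W 4" by (rule group_W)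
  have "\<one>\<^bsub>Aut0 4\<^esub> [2] = \<one>\<^bsub>W 4\<^esub> \<otimes>\<^bsub>W 4\<^esub> [2] \<otimes>\<^bsub>W 4\<^esub> inv\<^bsub>W 4\<^esub> \<one>\<^bsub>W 4\<^esub>"
    by (simp add: Aut0_one gen_carrier)
  then have "eps \<one>\<^bsub>Aut0 4\<^esub> = par \<one>\<^bsub>W 4\<^esub>" by (rule eps_conj[OF W4.one_closed])
  then show ?thesis by (simp add: W_one)
qed

lemma conj1_Stab: "conjW 4 [1] \<in> Stab"
  using conjW_A0[of "[1]" 4] by (simp add: Stab_def gen_carrier conjW_app W_inv W_mult)

lemma eps_conj1: "eps (conjW 4 [1])"
proof -
  have "conjW 4 [1] [2] = [1] \<otimes>\<^bsub>W 4\<^esub> [2] \<otimes>\<^bsub>W 4\<^esub> inv\<^bsub>W 4\<^esub> [1]"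
    by (simp add: conjW_app gen_carrier)
  then have "eps (conjW 4 [1]) = par [1]" using eps_conj[of "[1]" "conjW 4 [1]"] gen_carrier[of 1 4] by simp
  then show ?thesis by simp
qed

lemma Stab_Inn: "c \<in> Stab \<Longrightarrow> c \<in> Inn 4 \<Longrightarrow> c = \<one>\<^bsub>Aut0 4\<^esub> \<or> c = conjW 4 [1]"
proof -
  interpret W4: group "W 4" by (rule group_W)
  assume s: "c \<in> Stab" and i: "c \<in> Inn 4"
  then obtain g where g: "g \<in> carrier (W 4)" "c = conjW 4 g" unfolding Inn_def by auto
  have g1: "[1] \<in> carrier (W 4)" by (simp add: gen_carrier)
  have "g \<otimes>\<^bsub>W 4\<^esub> [1] \<otimes>\<^bsub>W 4\<^esub> inv\<^bsub>W 4\<^esub> g = [1]" using s g g1 by (simp add: Stab_def conjW_app)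
  then have "g \<otimes>\<^bsub>W 4\<^esub> [1] = [1] \<otimes>\<^bsub>W 4\<^esub> g"
    using g g1 by (metis W4.inv_solve_right W4.m_closed)
  then have "g = [] \<or> g = [1]" using centralizer[OF g(1)] by simp
  then show ?thesis using g conjW_one[of 4] by (auto simp: W_one)
qed

context fixes n :: nat assumes n4: "4 \<le> n"
begin

lemma Fm_one: "Fm n \<one>\<^bsub>Aut0 4\<^esub> = \<one>\<^bsub>Aut0 n\<^esub>"
  unfolding Aut0_one[of n]
proof (rule hom_ext_eq[OF Fm_hom[OF n4 one4_A0] id_ext Fm_ext[OF n4]])
  fix j assume j: "j \<in> {1..n}"
  have "Fm n \<one>\<^bsub>Aut0 4\<^esub> [j] = Fs n \<one>\<^bsub>Aut0 4\<^esub> j" by (rule Fm_gen[OF n4 one4_A0 j])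
  then show "Fm n \<one>\<^bsub>Aut0 4\<^esub> [j] = (\<lambda>x\<in>carrier (W n). x) [j]"
    using j eps_one gen_carrier[OF j] by (auto simp: Fs_def Aut0_one gen_carrier ee_def W_mult)
qed auto

lemma Fm_A0: "f \<in> Stab \<Longrightarrow> Fm n f \<in> A0 n"
proof -
  interpret Wn: group "W n" by (rule group_W)
  assume f: "f \<in> Stab"
  have fa: "f \<in> A0 4" using f by (simp add: Stab_def)
  have fi: "inv\<^bsub>Aut0 4\<^esub> f \<in> Stab" using Stab_inv[OF f] .
  have fia: "inv\<^bsub>Aut0 4\<^esub> f \<in> A0 4" using fi by (simp add: Stab_def)
  have c1: "compose (carrier (W n)) (Fm n (inv\<^bsub>Aut0 4\<^esub> f)) (Fm n f) = \<one>\<^bsub>Aut0 n\<^esub>"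
    using Fm_mult[OF n4 fi f] Fm_one group.l_inv[OF group_Aut0, of f 4] fa by (simp add: Aut0_carrier)
  have c2: "compose (carrier (W n)) (Fm n f) (Fm n (inv\<^bsub>Aut0 4\<^esub> f)) = \<one>\<^bsub>Aut0 n\<^esub>"
    using Fm_mult[OF n4 f fi] Fm_one group.r_inv[OF group_Aut0, of f 4] fa by (simp add: Aut0_carrier)
  have au: "Fm n f \<in> auto (W n)"
  proof (rule auto_intro[OF Fm_hom[OF n4 fa] Fm_ext[OF n4], of "Fm n (inv\<^bsub>Aut0 4\<^esub> f)"])
    show "Fm n (inv\<^bsub>Aut0 4\<^esub> f) \<in> carrier (W n) \<rightarrow> carrier (W n)"
      using hom_in_carrier[OF Fm_hom[OF n4 fia]] by blast
    fix x assume x: "x \<in> carrier (W n)"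
    show "Fm n (inv\<^bsub>Aut0 4\<^esub> f) (Fm n f x) = x"
      using fun_cong[OF c1, of x] x by (simp add: compose_def Aut0_one)
    show "Fm n f (Fm n (inv\<^bsub>Aut0 4\<^esub> f) x) = x"
      using fun_cong[OF c2, of x] x by (simp add: compose_def Aut0_one)
  qed
  have "\<forall>j\<in>{1..n}. \<exists>g\<in>carrier (W n). Fm n f [j] = g \<otimes>\<^bsub>W n\<^esub> [j] \<otimes>\<^bsub>W n\<^esub> inv\<^bsub>W n\<^esub> g"
  proof
    fix j assume j: "j \<in> {1..n}"
    show "\<exists>g\<in>carrier (W n). Fm n f [j] = g \<otimes>\<^bsub>W n\<^esub> [j] \<otimes>\<^bsub>W n\<^esub> inv\<^bsub>W n\<^esub> g"
    proof (cases "j \<le> 4")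
      case True
      then have j4: "j \<in> {1..4}" using j by auto
      obtain g where g: "g \<in> carrier (W 4)" "f [j] = g \<otimes>\<^bsub>W 4\<^esub> [j] \<otimes>\<^bsub>W 4\<^esub> inv\<^bsub>W 4\<^esub> g"
        using fa j4 unfolding A0_def by blast
      have gn: "g \<in> carrier (W n)" using g W4_sub[OF n4] by auto
      have "Fm n f [j] = g \<otimes>\<^bsub>W n\<^esub> [j] \<otimes>\<^bsub>W n\<^esub> inv\<^bsub>W n\<^esub> g"
        using g gn True by (simp add: Fm_gen[OF n4 fa j] Fs_def W_mult W_inv)
      then show ?thesis using gn by blast
    next
      case False
      have e: "ee (eps f) \<in> carrier (W n)" using n4 ee_carrier by simp
      have "Fm n f [j] = ee (eps f) \<otimes>\<^bsub>W n\<^esub> [j] \<otimes>\<^bsub>W n\<^esub> inv\<^bsub>W n\<^esub> ee (eps f)"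
        using False n4 by (simp add: Fm_gen[OF n4 fa j] Fs_def ee_inv)
      then show ?thesis using e by blast
    qed
  qed
  then show ?thesis using au by (simp add: A0_def)
qed

lemma Fm_mult': "f \<in> Stab \<Longrightarrow> h \<in> Stab \<Longrightarrow> Fm n (f \<otimes>\<^bsub>Aut0 4\<^esub> h) = Fm n f \<otimes>\<^bsub>Aut0 n\<^esub> Fm n h"
  using Fm_mult[OF n4] Fm_A0 by (simp add: Aut0_mult)

lemma Fm_conj1: "Fm n (conjW 4 [1]) = conjW n [1]"
proof -
  have c: "conjW 4 [1] \<in> A0 4" using conj1_Stab by (simp add: Stab_def)
  have g1: "[1] \<in> carrier (W n)" using n4 by (simp add: gen_carrier)
  show ?thesis
  proof (rule hom_ext_eq[OF Fm_hom[OF n4 c] conjW_hom[OF g1] Fm_ext[OF n4]])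
    show "conjW n [1] \<in> extensional (carrier (W n))" by (simp add: conjW_def)
    fix j assume j: "j \<in> {1..n}"
    show "Fm n (conjW 4 [1]) [j] = conjW n [1] [j]"
    proof (cases "j \<le> 4")
      case True
      then have j4: "j \<in> {1..4}" using j by auto
      have "Fm n (conjW 4 [1]) [j] = conjW 4 [1] [j]" unfolding Fm_gen[OF n4 c j] Fs_def using True by (rule if_P)
      then show ?thesis using True j j4 by (simp add: conjW_app gen_carrier W_mult W_inv)
    next
      case False
      have "Fm n (conjW 4 [1]) [j] = ee (eps (conjW 4 [1])) \<otimes>\<^bsub>W n\<^esub> [j] \<otimes>\<^bsub>W n\<^esub> ee (eps (conjW 4 [1]))"
        unfolding Fm_gen[OF n4 c j] Fs_def using False by (rule if_not_P)
      then show ?thesis using False j eps_conj1 by (simp add: conjW_app gen_carrier W_inv ee_def)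
    qed
  qed
qed

lemma Fm_StabInn: "c \<in> Stab \<Longrightarrow> c \<in> Inn 4 \<Longrightarrow> Fm n c \<in> Inn n"
proof -
  assume "c \<in> Stab" "c \<in> Inn 4"
  then have "c = \<one>\<^bsub>Aut0 4\<^esub> \<or> c = conjW 4 [1]" by (rule Stab_Inn)
  moreover have "\<one>\<^bsub>Aut0 n\<^esub> \<in> Inn n" using subgroup.one_closed[OF subgroup_Inn] .
  moreover have "conjW n [1] \<in> Inn n" using n4 by (auto simp: Inn_def gen_carrier)
  ultimately show ?thesis using Fm_one Fm_conj1 by auto
qed

end



lemma (in group) rcos_absorb:
  assumes "subgroup H G" "h \<in> H" "x \<in> carrier G"
  shows "H #> (h \<otimes> x) = H #> x"
proof -
  have hc: "h \<in> carrier G" by (rule subgroup.mem_carrier[OF assms(1,2)])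
  have "(H #> h) #> x = H #> (h \<otimes> x)"
    by (rule coset_mult_assoc[OF subgroup.subset[OF assms(1)] hc assms(3)])
  moreover have "H #> h = H" by (rule subgroup.rcos_const[OF assms(1) is_group assms(2)])
  ultimately show ?thesis by simp
qed

abbreviation R4 :: "(nat list \<Rightarrow> nat list) \<Rightarrow> (nat list \<Rightarrow> nat list) set" where "R4 f \<equiv> r_coset (Aut0 4) (Inn 4) f"
abbreviation Rn :: "nat \<Rightarrow> (nat list \<Rightarrow> nat list) \<Rightarrow> (nat list \<Rightarrow> nat list) set" where "Rn n f \<equiv> r_coset (Aut0 n) (Inn n) f"

lemma coset_Stab: "XX \<in> carrier (Out0 4) \<Longrightarrow> \<exists>f\<in>Stab. XX = R4 f"
proof -
  interpret A: group "Aut0 4" by (rule group_Aut0)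
  interpret W4: group "W 4" by (rule group_W)
  assume "XX \<in> carrier (Out0 4)"
  then obtain f0 where f0: "f0 \<in> carrier (Aut0 4)" "XX = R4 f0"
    by (auto simp: Out0_def carrier_FactGroup)
  have fa: "f0 \<in> A0 4" using f0 Aut0_carrier by auto
  obtain g where g: "g \<in> carrier (W 4)" "f0 [1] = g \<otimes>\<^bsub>W 4\<^esub> [1] \<otimes>\<^bsub>W 4\<^esub> inv\<^bsub>W 4\<^esub> g"
  proof -
    have "(1::nat) \<in> {1..4}" by simp
    then show ?thesis using fa that unfolding A0_def by blast
  qed
  define c where "c = conjW 4 (inv\<^bsub>W 4\<^esub> g)"
  have cI: "c \<in> Inn 4" unfolding c_def Inn_def using g by auto
  have cA: "c \<in> A0 4" using cI Inn_sub by auto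
  have f0c: "f0 [1] \<in> carrier (W 4)" using g gen_carrier[of 1 4] by simp
  have "(c \<otimes>\<^bsub>Aut0 4\<^esub> f0) [1] = c (f0 [1])" using cA fa by (simp add: Aut0_mult compose_def gen_carrier)
  also have "\<dots> = [1]" using g f0c gen_carrier[of 1 4] by (simp add: c_def conjW_app W4.m_assoc)
  finally have s: "c \<otimes>\<^bsub>Aut0 4\<^esub> f0 \<in> Stab" using cA fa A.m_closed by (simp add: Stab_def Aut0_carrier)
  have "R4 (c \<otimes>\<^bsub>Aut0 4\<^esub> f0) = R4 f0" by (rule A.rcos_absorb[OF subgroup_Inn cI f0(1)])
  then show ?thesis using s f0 by metis
qed

lemma coset_eq_Inn:
  assumes "f \<in> carrier (Aut0 m)" "f' \<in> carrier (Aut0 m)" "Rn m f = Rn m f'"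
  shows "f' \<otimes>\<^bsub>Aut0 m\<^esub> inv\<^bsub>Aut0 m\<^esub> f \<in> Inn m"
proof -
  interpret A: group "Aut0 m" by (rule group_Aut0)
  have "f' \<in> Rn m f" using assms A.rcos_self[OF assms(2) subgroup_Inn] by simp
  then show ?thesis using subgroup.rcos_module_imp[OF subgroup_Inn A.is_group assms(1)] by simp
qed

context fixes n :: nat assumes n4: "4 \<le> n"
begin

lemma Psi_wd:
  assumes f: "f \<in> Stab" and f': "f' \<in> Stab" and e: "R4 f = R4 f'"
  shows "Rn n (Fm n f) = Rn n (Fm n f')"
proof -
  interpret A: group "Aut0 4" by (rule group_Aut0)
  interpret An: group "Aut0 n" by (rule group_Aut0)
  have fc: "f \<in> carrier (Aut0 4)" and fc': "f' \<in> carrier (Aut0 4)" using f f' by (auto simp: Stab_def Aut0_carrier)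
  define k where "k = f' \<otimes>\<^bsub>Aut0 4\<^esub> inv\<^bsub>Aut0 4\<^esub> f"
  have kI: "k \<in> Inn 4" unfolding k_def by (rule coset_eq_Inn[OF fc fc' e])
  have kS: "k \<in> Stab" unfolding k_def by (rule Stab_mult[OF f' Stab_inv[OF f]])
  have "f' = k \<otimes>\<^bsub>Aut0 4\<^esub> f" unfolding k_def using fc fc' by (simp add: A.m_assoc)
  then have "Fm n f' = Fm n k \<otimes>\<^bsub>Aut0 n\<^esub> Fm n f" using Fm_mult'[OF n4 kS f] by simp
  moreover have kk: "Fm n k \<in> Inn n" by (rule Fm_StabInn[OF n4 kS kI])
  moreover have ff: "Fm n f \<in> carrier (Aut0 n)" using Fm_A0[OF n4 f] by (simp add: Aut0_carrier)
  moreover have "Rn n (Fm n k \<otimes>\<^bsub>Aut0 n\<^esub> Fm n f) = Rn n (Fm n f)"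
    by (rule An.rcos_absorb[OF subgroup_Inn kk ff])
  ultimately show ?thesis by simp
qed

definition psi :: "(nat list \<Rightarrow> nat list) set \<Rightarrow> (nat list \<Rightarrow> nat list) set" where
  "psi XX = Rn n (Fm n (SOME f. f \<in> Stab \<and> XX = R4 f))"

lemma psi_R: "f \<in> Stab \<Longrightarrow> psi (R4 f) = Rn n (Fm n f)"
proof -
  assume f: "f \<in> Stab"
  have "\<exists>f'. f' \<in> Stab \<and> R4 f = R4 f'" using f by blast
  then have s: "(SOME f'. f' \<in> Stab \<and> R4 f = R4 f') \<in> Stab \<and> R4 f = R4 (SOME f'. f' \<in> Stab \<and> R4 f = R4 f')"
    by (rule someI_ex)
  define F where "F = (SOME f'. f' \<in> Stab \<and> R4 f = R4 f')"
  have FS: "F \<in> Stab" and Fe: "R4 f = R4 F" using s unfolding F_def by auto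
  have "psi (R4 f) = Rn n (Fm n F)" unfolding psi_def F_def by simp
  also have "\<dots> = Rn n (Fm n f)" using Psi_wd[OF f FS Fe] by simp
  finally show ?thesis .
qed

lemma psi_hom: "psi \<in> hom (Out0 4) (Out0 n)"
proof (rule homI)
  interpret A: group "Aut0 4" by (rule group_Aut0)
  interpret An: group "Aut0 n" by (rule group_Aut0)
  fix XX assume "XX \<in> carrier (Out0 4)"
  then obtain f where f: "f \<in> Stab" "XX = R4 f" using coset_Stab by blast
  have "Fm n f \<in> carrier (Aut0 n)" using Fm_A0[OF n4 f(1)] by (simp add: Aut0_carrier)
  then show "psi XX \<in> carrier (Out0 n)"
    using f psi_R An.rcosetsI[OF subgroup.subset[OF subgroup_Inn]] by (simp add: Out0_def FactGroup_def)
next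
  interpret A: group "Aut0 4" by (rule group_Aut0)
  interpret An: group "Aut0 n" by (rule group_Aut0)
  fix XX YY assume "XX \<in> carrier (Out0 4)" "YY \<in> carrier (Out0 4)"
  then obtain f h where f: "f \<in> Stab" "XX = R4 f" and h: "h \<in> Stab" "YY = R4 h"
    using coset_Stab[of XX] coset_Stab[of YY] by blast
  have fc: "f \<in> carrier (Aut0 4)" and hc: "h \<in> carrier (Aut0 4)" using f h by (auto simp: Stab_def Aut0_carrier)
  have Ff: "Fm n f \<in> carrier (Aut0 n)" and Fh: "Fm n h \<in> carrier (Aut0 n)"
    using Fm_A0[OF n4 f(1)] Fm_A0[OF n4 h(1)] by (auto simp: Aut0_carrier)
  have "XX \<otimes>\<^bsub>Out0 4\<^esub> YY = R4 (f \<otimes>\<^bsub>Aut0 4\<^esub> h)"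
    using f h normal.rcos_sum[OF normal_Inn fc hc] by (simp add: Out0_def)
  then have "psi (XX \<otimes>\<^bsub>Out0 4\<^esub> YY) = Rn n (Fm n f \<otimes>\<^bsub>Aut0 n\<^esub> Fm n h)"
    using psi_R[OF Stab_mult[OF f(1) h(1)]] Fm_mult'[OF n4 f(1) h(1)] by simp
  also have "\<dots> = psi XX \<otimes>\<^bsub>Out0 n\<^esub> psi YY"
    using f h psi_R normal.rcos_sum[OF normal_Inn Ff Fh] by (simp add: Out0_def)
  finally show "psi (XX \<otimes>\<^bsub>Out0 4\<^esub> YY) = psi XX \<otimes>\<^bsub>Out0 n\<^esub> psi YY" .
qed

lemma redA_Fm: "f \<in> Stab \<Longrightarrow> redA n (Fm n f) = f"
proof -
  assume f: "f \<in> Stab"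
  have fa: "f \<in> A0 4" using f by (simp add: Stab_def)
  have fe: "f \<in> extensional (carrier (W 4))" using A0_facts[OF fa] by simp
  show ?thesis
  proof (rule extensionalityI[OF _ fe])
    show "redA n (Fm n f) \<in> extensional (carrier (W 4))" by (simp add: redA_def)
    fix x assume x: "x \<in> carrier (W 4)"
    have fx: "f x \<in> carrier (W 4)" using hom_in_carrier[OF conjunct1[OF A0_facts[OF fa]] x] .
    show "redA n (Fm n f) x = f x" using x Fm_W4[OF n4 fa x] pi_id[OF n4 fx] by (simp add: redA_def)
  qed
qed

end



lemma Min_lem: "1 \<le> i \<Longrightarrow> i \<le> n \<Longrightarrow> 2 \<le> n \<Longrightarrow> Min ({1..n} - {i}) = (if i = 1 then 2 else (1::nat))"
  by (rule Min_eqI) auto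

lemma gens4_D: "(i, D) \<in> gens 4 \<Longrightarrow> i \<in> {1..4} \<and> D \<subseteq> {1..4} \<and> i \<notin> D \<and> 1 \<notin> D \<and> (2 \<in> D \<longrightarrow> i \<noteq> 1)"
  unfolding gens_def using Min_lem[of i 4] by (auto split: if_splits)

lemma pconj4_Stab: "(i, D) \<in> gens 4 \<Longrightarrow> pconj 4 i D \<in> Stab"
proof -
  assume g: "(i, D) \<in> gens 4"
  note d = gens4_D[OF g]
  have "pconj 4 i D [1] = ps 4 i D 1" using d by (intro pconj_gen) auto
  then have "pconj 4 i D [1] = [1]" using d by (simp add: ps_def)
  then show ?thesis using pconj_A0[of i 4 D] d by (simp add: Stab_def)
qed

lemma eps_pconj4: "(i, D) \<in> gens 4 \<Longrightarrow> \<not> eps (pconj 4 i D)"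
proof -
  interpret W4: group "W 4" by (rule group_W)
  assume g: "(i, D) \<in> gens 4"
  note d = gens4_D[OF g]
  have gi: "[i] \<in> carrier (W 4)" using d gen_carrier by auto
  have e: "pconj 4 i D [2] = ps 4 i D 2" using d by (intro pconj_gen) auto
  show ?thesis
  proof (cases "2 \<in> D")
    case True
    then have "pconj 4 i D [2] = [i] \<otimes>\<^bsub>W 4\<^esub> [2] \<otimes>\<^bsub>W 4\<^esub> inv\<^bsub>W 4\<^esub> [i]"
      using e gi by (simp add: ps_def W_inv)
    then have "eps (pconj 4 i D) = par [i]" by (rule eps_conj[OF gi])
    then show ?thesis using True d by simp
  next
    case False
    then have "pconj 4 i D [2] = \<one>\<^bsub>W 4\<^esub> \<otimes>\<^bsub>W 4\<^esub> [2] \<otimes>\<^bsub>W 4\<^esub> inv\<^bsub>W 4\<^esub> \<one>\<^bsub>W 4\<^esub>"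
      using e by (simp add: ps_def gen_carrier)
    then have "eps (pconj 4 i D) = par \<one>\<^bsub>W 4\<^esub>" by (rule eps_conj[OF W4.one_closed])
    then show ?thesis by (simp add: W_one)
  qed
qed

lemma Fm_pconj4:
  assumes n4: "4 \<le> n" and g: "(i, D) \<in> gens 4"
  shows "Fm n (pconj 4 i D) = pconj n i D"
proof -
  note d = gens4_D[OF g]
  have A: "pconj 4 i D \<in> A0 4" using pconj4_Stab[OF g] by (simp add: Stab_def)
  have "Fs n (pconj 4 i D) j = ps n i D j" if j: "j \<in> {1..n}" for j
  proof (cases "j \<le> 4")
    case True
    have "pconj 4 i D [j] = ps 4 i D j" using d j True by (intro pconj_gen) auto
    then show ?thesis using True by (simp add: Fs_def ps_def W_mult)
  next
    case False
    then show ?thesis using eps_pconj4[OF g] d by (auto simp: Fs_def ps_def ee_def W_mult)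
  qed
  then show ?thesis unfolding Fm_def pconj_eq
    by (intro restrict_ext prodG_cong) (auto simp: W_carrier)
qed

lemma coset_one_Out: "x \<in> Inn m \<Longrightarrow> r_coset (Aut0 m) (Inn m) x = \<one>\<^bsub>Out0 m\<^esub>"
  by (simp add: Out0_def subgroup.rcos_const[OF subgroup_Inn group_Aut0])

theorem mainTheorem5:
  fixes n :: nat
  assumes "n \<ge> 4"
  defines "F \<equiv> {5..n}"
  shows "\<exists>\<phi> \<psi>.
     \<phi> \<in> hom (Out0 n) (Out0 4)
   \<and> \<phi> ` carrier (Out0 n) = carrier (Out0 4)
   \<and> (\<forall>(i, D) \<in> gens n. \<phi> (Xc n i D) =
         (if i \<ge> 5 \<or> D \<subseteq> F \<or> Dc n i D \<subseteq> F then \<one>\<^bsub>Out0 4\<^esub> else Xc 4 i (D - F)))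
   \<and> \<psi> \<in> hom (Out0 4) (Out0 n)
   \<and> (\<forall>(i, D) \<in> gens 4. \<psi> (Xc 4 i D) = Xc n i D)
   \<and> (\<forall>y \<in> carrier (Out0 4). \<phi> (\<psi> y) = y)
   \<and> kernel (Out0 n) (Out0 4) \<phi> \<lhd> Out0 n
   \<and> subgroup (\<psi> ` carrier (Out0 4)) (Out0 n)
   \<and> kernel (Out0 n) (Out0 4) \<phi> \<inter> \<psi> ` carrier (Out0 4) = {\<one>\<^bsub>Out0 n\<^esub>}
   \<and> kernel (Out0 n) (Out0 4) \<phi> <#>\<^bsub>Out0 n\<^esub> \<psi> ` carrier (Out0 4) = carrier (Out0 n)
   \<and> inj_on \<psi> (carrier (Out0 4))
   \<and> \<psi> \<in> iso (Out0 4) ((Out0 n)\<lparr>carrier := \<psi> ` carrier (Out0 4)\<rparr>)"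
proof -
  have n4: "4 \<le> n" using assms(1) .
  interpret G: group "Out0 n" by (rule group_Out0)
  interpret H: group "Out0 4" by (rule group_Out0)
  obtain \<phi> where ph: "\<phi> \<in> hom (Out0 n) (Out0 4)"
    and phR: "\<And>f. f \<in> carrier (Aut0 n) \<Longrightarrow> \<phi> (Rn n f) = Phi n f"
    using phi_exists[OF n4] by blast
  define \<psi> where "\<psi> = psi n"
  have ps: "\<psi> \<in> hom (Out0 4) (Out0 n)" unfolding \<psi>_def by (rule psi_hom[OF n4])
  interpret GH: group_hom "Out0 n" "Out0 4" \<phi>
    by (simp add: group_hom.intro group_hom_axioms.intro G.group_axioms H.group_axioms ph)
  interpret HG: group_hom "Out0 4" "Out0 n" \<psi>
    by (simp add: group_hom.intro group_hom_axioms.intro G.group_axioms H.group_axioms ps)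
  have inv: "\<phi> (\<psi> y) = y" if y: "y \<in> carrier (Out0 4)" for y
  proof -
    obtain f where f: "f \<in> Stab" "y = R4 f" using coset_Stab[OF y] by blast
    have Ff: "Fm n f \<in> carrier (Aut0 n)" using Fm_A0[OF n4 f(1)] by (simp add: Aut0_carrier)
    have "\<phi> (\<psi> y) = Phi n (Fm n f)" using f psi_R[OF n4 f(1)] phR[OF Ff] by (simp add: \<psi>_def)
    also have "\<dots> = y" using f redA_Fm[OF n4 f(1)] by (simp add: Phi_def)
    finally show ?thesis .
  qed
  have psgen: "\<forall>(i, D) \<in> gens 4. \<psi> (Xc 4 i D) = Xc n i D"
  proof (clarify)
    fix i D assume g: "(i, D) \<in> gens 4"
    show "\<psi> (Xc 4 i D) = Xc n i D"
      using psi_R[OF n4 pconj4_Stab[OF g]] Fm_pconj4[OF n4 g] by (simp add: \<psi>_def Xc_def)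
  qed
  have phgen: "\<forall>(i, D) \<in> gens n. \<phi> (Xc n i D) =
         (if i \<ge> 5 \<or> D \<subseteq> F \<or> Dc n i D \<subseteq> F then \<one>\<^bsub>Out0 4\<^esub> else Xc 4 i (D - F))"
  proof (clarify)
    fix i D assume g: "(i, D) \<in> gens n"
    have i: "i \<in> {1..n}" and D: "D \<subseteq> {1..n}" "i \<notin> D" using g by (auto simp: gens_def)
    have pc: "pconj n i D \<in> carrier (Aut0 n)" using pconj_A0[OF i D] by (simp add: Aut0_carrier)
    have e: "\<phi> (Xc n i D) = R4 (redA n (pconj n i D))"
      using phR[OF pc] by (simp add: Xc_def Phi_def)
    show "\<phi> (Xc n i D) =
         (if i \<ge> 5 \<or> D \<subseteq> F \<or> Dc n i D \<subseteq> F then \<one>\<^bsub>Out0 4\<^esub> else Xc 4 i (D - F))"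
    proof (cases "i \<le> 4")
      case False
      have "\<one>\<^bsub>Aut0 4\<^esub> \<in> Inn 4" by (rule subgroup.one_closed[OF subgroup_Inn])
      then show ?thesis using e False redA_pconj[OF n4 i D] coset_one_Out[of "\<one>\<^bsub>Aut0 4\<^esub>" 4]
        by (simp add: Aut0_one)
    next
      case True
      have i4: "i \<in> {1..4}" using True i by auto
      have red: "redA n (pconj n i D) = pconj 4 i (D \<inter> {1..4})"
        using redA_pconj[OF n4 i D] True by simp
      show ?thesis
      proof (cases "D \<subseteq> F")
        case True
        then have "D \<inter> {1..4} = {}" unfolding F_def by auto
        moreover have "\<one>\<^bsub>Aut0 4\<^esub> \<in> Inn 4" by (rule subgroup.one_closed[OF subgroup_Inn])
        ultimately show ?thesis using e red True pconj4_empty[OF i4] coset_one_Out[of "\<one>\<^bsub>Aut0 4\<^esub>" 4]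
          by (simp add: Aut0_one)
      next
        case nF: False
        show ?thesis
        proof (cases "Dc n i D \<subseteq> F")
          case True
          have "x \<in> D" if x: "x \<in> {1..4}" "x \<noteq> i" for x
          proof (rule ccontr)
            assume "x \<notin> D"
            then have "x \<in> Dc n i D" using x n4 by (auto simp: Dc_def)
            then have "x \<in> F" using True by blast
            then show False using x unfolding F_def by auto
          qed
          then have "D \<inter> {1..4} = {1..4} - {i}" using D i4 n4 by auto
          moreover have "conjW 4 [i] \<in> Inn 4" using i4 by (auto simp: Inn_def gen_carrier)
          ultimately show ?thesis using e red True pconj4_full[OF i4] coset_one_Out[of "conjW 4 [i]" 4]
            by simp
        next
          case False
          have "D - F = D \<inter> {1..4}" using D unfolding F_def by auto
          then show ?thesis using e red False nF \<open>i \<le> 4\<close> by (simp add: Xc_def)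
        qed
      qed
    qed
  qed
  have surj: "\<phi> ` carrier (Out0 n) = carrier (Out0 4)"
  proof
    show "\<phi> ` carrier (Out0 n) \<subseteq> carrier (Out0 4)" using GH.hom_closed by auto
    show "carrier (Out0 4) \<subseteq> \<phi> ` carrier (Out0 n)"
    proof
      fix y assume y: "y \<in> carrier (Out0 4)"
      then have "y = \<phi> (\<psi> y)" using inv by simp
      then show "y \<in> \<phi> ` carrier (Out0 n)" using HG.hom_closed[OF y] by blast
    qed
  qed
  have inj: "inj_on \<psi> (carrier (Out0 4))"
    by (rule inj_on_inverseI[of _ \<phi>]) (use inv in auto)
  have kerint: "kernel (Out0 n) (Out0 4) \<phi> \<inter> \<psi> ` carrier (Out0 4) = {\<one>\<^bsub>Out0 n\<^esub>}"
  proof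
    show "kernel (Out0 n) (Out0 4) \<phi> \<inter> \<psi> ` carrier (Out0 4) \<subseteq> {\<one>\<^bsub>Out0 n\<^esub>}"
    proof
      fix x assume "x \<in> kernel (Out0 n) (Out0 4) \<phi> \<inter> \<psi> ` carrier (Out0 4)"
      then obtain y where y: "y \<in> carrier (Out0 4)" "x = \<psi> y" "\<phi> x = \<one>\<^bsub>Out0 4\<^esub>"
        by (auto simp: kernel_def)
      then have "y = \<one>\<^bsub>Out0 4\<^esub>" using inv by simp
      then show "x \<in> {\<one>\<^bsub>Out0 n\<^esub>}" using y by simp
    qed
    show "{\<one>\<^bsub>Out0 n\<^esub>} \<subseteq> kernel (Out0 n) (Out0 4) \<phi> \<inter> \<psi> ` carrier (Out0 4)"
      using HG.hom_one[symmetric] H.one_closed image_eqI[of "\<one>\<^bsub>Out0 n\<^esub>" \<psi> "\<one>\<^bsub>Out0 4\<^esub>" "carrier (Out0 4)"]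
      by (auto simp: kernel_def)
  qed
  have prod: "kernel (Out0 n) (Out0 4) \<phi> <#>\<^bsub>Out0 n\<^esub> \<psi> ` carrier (Out0 4) = carrier (Out0 n)"
  proof
    show "kernel (Out0 n) (Out0 4) \<phi> <#>\<^bsub>Out0 n\<^esub> \<psi> ` carrier (Out0 4) \<subseteq> carrier (Out0 n)"
      using HG.hom_closed by (auto simp: set_mult_def kernel_def)
    show "carrier (Out0 n) \<subseteq> kernel (Out0 n) (Out0 4) \<phi> <#>\<^bsub>Out0 n\<^esub> \<psi> ` carrier (Out0 4)"
    proof
      fix x assume x: "x \<in> carrier (Out0 n)"
      define y where "y = \<phi> x"
      have y: "y \<in> carrier (Out0 4)" using x y_def by simp
      have py: "\<psi> y \<in> carrier (Out0 n)" using y by simp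
      define k where "k = x \<otimes>\<^bsub>Out0 n\<^esub> inv\<^bsub>Out0 n\<^esub> \<psi> y"
      have kc: "k \<in> carrier (Out0 n)" using x py k_def by simp
      have "\<phi> k = \<phi> x \<otimes>\<^bsub>Out0 4\<^esub> inv\<^bsub>Out0 4\<^esub> \<phi> (\<psi> y)" using x py k_def by simp
      then have "\<phi> k = \<one>\<^bsub>Out0 4\<^esub>" using inv[OF y] y y_def by simp
      then have kk: "k \<in> kernel (Out0 n) (Out0 4) \<phi>" using kc by (simp add: kernel_def)
      have "x = k \<otimes>\<^bsub>Out0 n\<^esub> \<psi> y" using x py k_def by (simp add: G.m_assoc)
      then show "x \<in> kernel (Out0 n) (Out0 4) \<phi> <#>\<^bsub>Out0 n\<^esub> \<psi> ` carrier (Out0 4)"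
        using kk y unfolding set_mult_def by blast
    qed
  qed
  have sub: "subgroup (\<psi> ` carrier (Out0 4)) (Out0 n)"
    by (rule HG.img_is_subgroup)
  have iso: "\<psi> \<in> iso (Out0 4) ((Out0 n)\<lparr>carrier := \<psi> ` carrier (Out0 4)\<rparr>)"
  proof -
    have h: "\<psi> \<in> hom (Out0 4) ((Out0 n)\<lparr>carrier := \<psi> ` carrier (Out0 4)\<rparr>)"
      by (rule homI) auto
    have b: "bij_betw \<psi> (carrier (Out0 4)) (carrier ((Out0 n)\<lparr>carrier := \<psi> ` carrier (Out0 4)\<rparr>))"
      using inj by (simp add: bij_betw_def)
    show ?thesis unfolding iso_def using h b by blast
  qed
  have invall: "\<forall>y \<in> carrier (Out0 4). \<phi> (\<psi> y) = y" using inv by blast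
  show ?thesis
    by (intro exI[of _ \<phi>] exI[of _ \<psi>] conjI ph surj phgen ps psgen sub kerint prod inj iso GH.normal_kernel invall)
qed


end
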